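(* Let $(W,S)$ be a Coxeter system with $S$ finite, let $Q_W$ be its Coxeter quandle, let $\phi:\operatorname{Ad}(Q_W)\to W$ be the homomorphism $e_x\mapsto x$, and let $C_W=\ker\phi$. Let $\mathcal{R}_W\subseteq S$ be a complete set of representatives of the $W$-conjugacy classes of elements of $Q_W$, and let $c(W)$ be the number of such conjugacy classes. Then $C_W$ is the free abelian group with basis $\{e_s^2\mid s\in\mathcal{R}_W\}$. In particular $C_W\cong\mathbb{Z}^{c(W)}$.
   Context: A Coxeter system $(W,S)$: $S$ is a finite set, $m:S\times S\to\mathbb{N}\cup\{\infty\}$ satisfies $m(s,s)=1$ and $2\le m(s,t)=m(t,s)\le\infty$ for $s\neq t$, and $W=\langle s\in S\mid (st)^{m(s,t)}=1\ (m(s,t)<\infty)\rangle$. The Coxeter quandle is $Q_W=\bigcup_{w\in W}w^{-1}Sw$ (the set of reflections) with operation $x\ast y=y^{-1}xy=yxy$. The adjoint group of $Q_W$ is $\operatorname{Ad}(Q_W)=\langle e_x\ (x\in Q_W)\mid e_y^{-1}e_xe_y=e_{x\ast y}\ (x,y\in Q_W)\rangle$. The map $\phi:\operatorname{Ad}(Q_W)\to W$, $e_x\mapsto x$, is a well-defined surjective homomorphism. Every $W$-conjugacy class of $Q_W$ meets $S$, so $\mathcal{R}_W\subseteq S$ can be chosen. *)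

theory Defs
  imports "HOL-Algebra.Algebra" "HOL-Library.Extended_Nat" "HOL-Library.FuncSet"
begin

text \<open>Words over a generating set Gs: lists of letters (x, b), where b = True means
  the formal inverse of x.  A relator is such a word.\<close>

inductive_set pres_step :: "'a set \<Rightarrow> ('a \<times> bool) list set \<Rightarrow> (('a \<times> bool) list \<times> ('a \<times> bool) list) set"
  for Gs :: "'a set" and R :: "('a \<times> bool) list set" where
  cancel: "\<lbrakk>u \<in> lists (Sigma Gs (\<lambda>_. UNIV)); v \<in> lists (Sigma Gs (\<lambda>_. UNIV)); x \<in> Gs\<rbrakk>
           \<Longrightarrow> (u @ v, u @ [(x, b), (x, \<not> b)] @ v) \<in> pres_step Gs R"
| relator: "\<lbrakk>u \<in> lists (Sigma Gs (\<lambda>_. UNIV)); v \<in> lists (Sigma Gs (\<lambda>_. UNIV)); r \<in> R\<rbrakk>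
           \<Longrightarrow> (u @ v, u @ r @ v) \<in> pres_step Gs R"

definition pres_eq :: "'a set \<Rightarrow> ('a \<times> bool) list set \<Rightarrow> (('a \<times> bool) list \<times> ('a \<times> bool) list) set" where
  "pres_eq Gs R = (pres_step Gs R \<union> converse (pres_step Gs R))\<^sup>*"

definition presented_group :: "'a set \<Rightarrow> ('a \<times> bool) list set \<Rightarrow> ('a \<times> bool) list set monoid" where
  "presented_group Gs R =
     \<lparr> carrier = lists (Sigma Gs (\<lambda>_. UNIV)) // pres_eq Gs R,
       monoid.mult = (\<lambda>A B. pres_eq Gs R `` {(SOME a. a \<in> A) @ (SOME b. b \<in> B)}),
       monoid.one = pres_eq Gs R `` {[]} \<rparr>"

definition pgen :: "'a set \<Rightarrow> ('a \<times> bool) list set \<Rightarrow> 'a \<Rightarrow> ('a \<times> bool) list set" where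
  "pgen Gs R x = pres_eq Gs R `` {[(x, False)]}"

definition eval_word :: "('b, 'c) monoid_scheme \<Rightarrow> ('a \<Rightarrow> 'b) \<Rightarrow> ('a \<times> bool) list \<Rightarrow> 'b" where
  "eval_word G f w = foldr (\<lambda>(x, b) acc. (if b then inv\<^bsub>G\<^esub> (f x) else f x) \<otimes>\<^bsub>G\<^esub> acc) w \<one>\<^bsub>G\<^esub>"

definition coxeter_matrix :: "'a set \<Rightarrow> ('a \<Rightarrow> 'a \<Rightarrow> enat) \<Rightarrow> bool" where
  "coxeter_matrix S m \<longleftrightarrow>
     (\<forall>s\<in>S. m s s = 1) \<and>
     (\<forall>s\<in>S. \<forall>t\<in>S. s \<noteq> t \<longrightarrow> 2 \<le> m s t \<and> m s t = m t s)"

text \<open>Relators (st)^{m(s,t)} for m(s,t) finite (m = \<infinity> gives no relation).\<close>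
definition cox_rels :: "'a set \<Rightarrow> ('a \<Rightarrow> 'a \<Rightarrow> enat) \<Rightarrow> ('a \<times> bool) list set" where
  "cox_rels S m = {concat (replicate k [(s, False), (t, False)]) | s t k.
                     s \<in> S \<and> t \<in> S \<and> m s t = enat k}"

definition coxeter_group :: "'a set \<Rightarrow> ('a \<Rightarrow> 'a \<Rightarrow> enat) \<Rightarrow> ('a \<times> bool) list set monoid" where
  "coxeter_group S m = presented_group S (cox_rels S m)"

definition cox_gen :: "'a set \<Rightarrow> ('a \<Rightarrow> 'a \<Rightarrow> enat) \<Rightarrow> 'a \<Rightarrow> ('a \<times> bool) list set" where
  "cox_gen S m s = pgen S (cox_rels S m) s"

definition coxeter_quandle :: "'a set \<Rightarrow> ('a \<Rightarrow> 'a \<Rightarrow> enat) \<Rightarrow> ('a \<times> bool) list set set" where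
  "coxeter_quandle S m =
     {inv\<^bsub>coxeter_group S m\<^esub> w \<otimes>\<^bsub>coxeter_group S m\<^esub> cox_gen S m s \<otimes>\<^bsub>coxeter_group S m\<^esub> w
        | w s. w \<in> carrier (coxeter_group S m) \<and> s \<in> S}"

definition quandle_op :: "'a set \<Rightarrow> ('a \<Rightarrow> 'a \<Rightarrow> enat) \<Rightarrow> ('a \<times> bool) list set \<Rightarrow> ('a \<times> bool) list set \<Rightarrow> ('a \<times> bool) list set" where
  "quandle_op S m x y =
     inv\<^bsub>coxeter_group S m\<^esub> y \<otimes>\<^bsub>coxeter_group S m\<^esub> x \<otimes>\<^bsub>coxeter_group S m\<^esub> y"

definition ad_rels :: "'a set \<Rightarrow> ('a \<Rightarrow> 'a \<Rightarrow> enat) \<Rightarrow> (('a \<times> bool) list set \<times> bool) list set" where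
  "ad_rels S m = {[(y, True), (x, False), (y, False), (quandle_op S m x y, True)] | x y.
                    x \<in> coxeter_quandle S m \<and> y \<in> coxeter_quandle S m}"

definition adjoint_group :: "'a set \<Rightarrow> ('a \<Rightarrow> 'a \<Rightarrow> enat) \<Rightarrow> (('a \<times> bool) list set \<times> bool) list set monoid" where
  "adjoint_group S m = presented_group (coxeter_quandle S m) (ad_rels S m)"

definition ad_gen :: "'a set \<Rightarrow> ('a \<Rightarrow> 'a \<Rightarrow> enat) \<Rightarrow> ('a \<times> bool) list set \<Rightarrow> (('a \<times> bool) list set \<times> bool) list set" where
  "ad_gen S m x = pgen (coxeter_quandle S m) (ad_rels S m) x"

definition ad_phi :: "'a set \<Rightarrow> ('a \<Rightarrow> 'a \<Rightarrow> enat) \<Rightarrow> (('a \<times> bool) list set \<times> bool) list set \<Rightarrow> ('a \<times> bool) list set" where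
  "ad_phi S m A = eval_word (coxeter_group S m) id (SOME w. w \<in> A)"

definition quandle_classes :: "'a set \<Rightarrow> ('a \<Rightarrow> 'a \<Rightarrow> enat) \<Rightarrow> ('a \<times> bool) list set set set" where
  "quandle_classes S m =
     {{inv\<^bsub>coxeter_group S m\<^esub> w \<otimes>\<^bsub>coxeter_group S m\<^esub> x \<otimes>\<^bsub>coxeter_group S m\<^esub> w
        | w. w \<in> carrier (coxeter_group S m)} | x. x \<in> coxeter_quandle S m}"

definition num_classes :: "'a set \<Rightarrow> ('a \<Rightarrow> 'a \<Rightarrow> enat) \<Rightarrow> nat" where
  "num_classes S m = card (quandle_classes S m)"

end

theory Submission
  imports Defs
begin


abbreviation words :: "'a set \<Rightarrow> ('a \<times> bool) list set" where
  "words Gs \<equiv> lists (Sigma Gs (\<lambda>_. (UNIV::bool set)))"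

definition winv :: "('a \<times> bool) list \<Rightarrow> ('a \<times> bool) list" where
  "winv w = rev (map (\<lambda>(x,b). (x, \<not> b)) w)"

lemma winv_simps [simp]: "winv [] = []" "winv (p # w) = winv w @ [(fst p, \<not> snd p)]"
  "winv (u @ v) = winv v @ winv u"
  by (auto simp: winv_def split: prod.splits)

lemma winv_words [simp]: "winv w \<in> words Gs \<longleftrightarrow> w \<in> words Gs"
  by (induction w) auto

section \<open>Evaluation of words\<close>

lemma eval_word_Nil [simp]: "eval_word G f [] = \<one>\<^bsub>G\<^esub>"
  by (simp add: eval_word_def)

lemma eval_word_Cons [simp]:
  "eval_word G f ((x,b) # w) = (if b then inv\<^bsub>G\<^esub> (f x) else f x) \<otimes>\<^bsub>G\<^esub> eval_word G f w"
  by (simp add: eval_word_def)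

lemma (in group) eval_word_closed [simp]:
  "f ` Gs \<subseteq> carrier G \<Longrightarrow> w \<in> words Gs \<Longrightarrow> eval_word G f w \<in> carrier G"
  by (induction w) auto

lemma (in group) eval_word_append:
  "f ` Gs \<subseteq> carrier G \<Longrightarrow> u \<in> words Gs \<Longrightarrow> v \<in> words Gs \<Longrightarrow>
   eval_word G f (u @ v) = eval_word G f u \<otimes> eval_word G f v"
proof (induction u)
  case (Cons p u)
  obtain x b where p: "p = (x,b)" by force
  have fx: "f x \<in> carrier G" using Cons.prems p by auto
  have "eval_word G f u \<in> carrier G" "eval_word G f v \<in> carrier G"
    using Cons.prems by (auto intro!: eval_word_closed[of f Gs])
  then show ?case using Cons p fx by (auto simp: m_assoc)
qed simp

lemma (in group) eval_word_winv:
  "f ` Gs \<subseteq> carrier G \<Longrightarrow> w \<in> words Gs \<Longrightarrow>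
   eval_word G f (winv w) = inv (eval_word G f w)"
proof (induction w)
  case Nil then show ?case by simp
next
  case (Cons p w)
  obtain x b where p: "p = (x,b)" by force
  have x: "x \<in> Gs" and w: "w \<in> words Gs" using Cons.prems p by auto
  have fx: "f x \<in> carrier G" using Cons.prems(1) x by auto
  have "eval_word G f (winv (p # w)) = eval_word G f (winv w) \<otimes> eval_word G f [(x, \<not> b)]"
    using Cons.prems p by (simp add: eval_word_append del: eval_word_Cons)
  also have "\<dots> = inv (eval_word G f w) \<otimes> (if b then f x else inv (f x))"
    using Cons fx w by auto
  also have "\<dots> = inv ((if b then inv (f x) else f x) \<otimes> eval_word G f w)"
    using fx w Cons.prems by (auto simp: inv_mult_group)
  finally show ?case using p by simp
qed

lemma eval_word_hom:
  assumes "group G" "group H" "h \<in> hom G H" "f ` Gs \<subseteq> carrier G"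
  shows "w \<in> words Gs \<Longrightarrow> h (eval_word G f w) = eval_word H (h \<circ> f) w"
proof (induction w)
  case Nil then show ?case using assms by (simp add: group_hom.hom_one group_hom_axioms.intro group_hom_def)
next
  case (Cons p w)
  obtain x b where p: "p = (x,b)" by force
  have x: "x \<in> Gs" and w: "w \<in> words Gs" using Cons.prems p by auto
  interpret gh: group_hom G H h using assms by (simp add: group_hom_axioms.intro group_hom_def)
  have fx: "f x \<in> carrier G" using assms(4) x by auto
  show ?case using Cons w fx p
    by (auto simp: gh.hom_mult gh.hom_inv group.eval_word_closed[OF assms(1) assms(4)])
qed

section \<open>Presentations\<close>

locale pres =
  fixes Gs :: "'a set" and R :: "('a \<times> bool) list set"
  assumes R_ok: "R \<subseteq> words Gs"
begin

abbreviation "EQ \<equiv> pres_eq Gs R"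
abbreviation "PG \<equiv> presented_group Gs R"

definition cls where "cls w = EQ `` {w}"

lemma step_words: "(a,b) \<in> pres_step Gs R \<Longrightarrow> a \<in> words Gs \<and> b \<in> words Gs"
  by (induction rule: pres_step.induct) (use R_ok in auto)

lemma EQ_refl [simp]: "(a,a) \<in> EQ"
  by (simp add: pres_eq_def)

lemma EQ_sym: "(a,b) \<in> EQ \<Longrightarrow> (b,a) \<in> EQ"
  unfolding pres_eq_def
  by (metis converse_Un converse_converse rtrancl_converseI sup_commute)

lemma EQ_trans: "(a,b) \<in> EQ \<Longrightarrow> (b,c) \<in> EQ \<Longrightarrow> (a,c) \<in> EQ"
  unfolding pres_eq_def by (rule rtrancl_trans)

lemma EQ_words: "(a,b) \<in> EQ \<Longrightarrow> a \<in> words Gs \<Longrightarrow> b \<in> words Gs"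
  unfolding pres_eq_def
  by (induction rule: rtrancl_induct) (auto dest: step_words)

lemma step_append:
  assumes "(a,b) \<in> pres_step Gs R" "v \<in> words Gs"
  shows "(a @ v, b @ v) \<in> pres_step Gs R \<and> (v @ a, v @ b) \<in> pres_step Gs R"
  using assms(1)
proof (cases rule: pres_step.cases)
  case (cancel u w x c)
  have 1: "(u @ (w @ v), u @ [(x, c), (x, \<not> c)] @ (w @ v)) \<in> pres_step Gs R"
    by (rule pres_step.cancel) (use cancel assms in auto)
  have 2: "((v @ u) @ w, (v @ u) @ [(x, c), (x, \<not> c)] @ w) \<in> pres_step Gs R"
    by (rule pres_step.cancel) (use cancel assms in auto)
  show ?thesis using 1 2 cancel by simp
next
  case (relator u w r)
  have 1: "(u @ (w @ v), u @ r @ (w @ v)) \<in> pres_step Gs R"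
    by (rule pres_step.relator) (use relator assms in auto)
  have 2: "((v @ u) @ w, (v @ u) @ r @ w) \<in> pres_step Gs R"
    by (rule pres_step.relator) (use relator assms in auto)
  show ?thesis using 1 2 relator by simp
qed

lemma EQ_append:
  assumes "(a,b) \<in> EQ" "v \<in> words Gs"
  shows "(a @ v, b @ v) \<in> EQ \<and> (v @ a, v @ b) \<in> EQ"
  using assms(1) unfolding pres_eq_def
proof (induction rule: rtrancl_induct)
  case base then show ?case by simp
next
  case (step y z)
  then have "(y @ v, z @ v) \<in> (pres_step Gs R \<union> (pres_step Gs R)\<inverse>) \<and>
             (v @ y, v @ z) \<in> (pres_step Gs R \<union> (pres_step Gs R)\<inverse>)"
    using step_append[OF _ assms(2)] by blast
  then show ?case using step.IH by (meson rtrancl.rtrancl_into_rtrancl)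
qed

lemma EQ_append2:
  assumes "(a,a') \<in> EQ" "(b,b') \<in> EQ" "a \<in> words Gs" "b \<in> words Gs"
  shows "(a @ b, a' @ b') \<in> EQ"
proof -
  have "(a @ b, a' @ b) \<in> EQ" using EQ_append assms by blast
  moreover have "(a' @ b, a' @ b') \<in> EQ" using EQ_append EQ_words assms by blast
  ultimately show ?thesis by (rule EQ_trans)
qed

lemma EQ_cancel: "x \<in> Gs \<Longrightarrow> ([(x,b),(x,\<not> b)], []) \<in> EQ"
proof -
  assume x: "x \<in> Gs"
  have "([] @ [], [] @ [(x,b),(x,\<not> b)] @ []) \<in> pres_step Gs R"
    by (rule pres_step.cancel) (use x in auto)
  then show ?thesis unfolding pres_eq_def by auto
qed

lemma EQ_rel: "r \<in> R \<Longrightarrow> (r, []) \<in> EQ"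
proof -
  assume r: "r \<in> R"
  have "([] @ [], [] @ r @ []) \<in> pres_step Gs R"
    by (rule pres_step.relator) (use r in auto)
  then show ?thesis unfolding pres_eq_def by auto
qed

lemma EQ_winv: "w \<in> words Gs \<Longrightarrow> (w @ winv w, []) \<in> EQ \<and> (winv w @ w, []) \<in> EQ"
proof (induction w)
  case Nil then show ?case by simp
next
  case (Cons p w)
  obtain x b where p: "p = (x,b)" by force
  have x: "x \<in> Gs" and w: "w \<in> words Gs" using Cons.prems p by auto
  have "((w @ winv w) @ [(x, \<not> b)], [] @ [(x, \<not> b)]) \<in> EQ"
    using Cons.IH[OF w] x EQ_append[of "w @ winv w" "[]" "[(x, \<not> b)]"] by auto
  then have "([(x,b)] @ ((w @ winv w) @ [(x, \<not> b)]), [(x,b)] @ ([] @ [(x, \<not> b)])) \<in> EQ"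
    using x EQ_append[of _ _ "[(x,b)]"] by auto
  then have 1: "((x,b) # w @ winv w @ [(x, \<not> b)], [(x,b), (x, \<not> b)]) \<in> EQ" by simp
  have 2: "((winv w) @ ([(x, \<not> b), (x, \<not> \<not> b)] @ w), (winv w) @ w) \<in> EQ"
    using EQ_cancel[OF x, of "\<not> b"] EQ_append w x by (metis winv_words append_Nil)
  show ?case
    using EQ_trans[OF 1 EQ_cancel[OF x, of b]] EQ_trans[OF 2 conjunct2[OF Cons.IH[OF w]]] p
    by simp
qed

lemma cls_eq: "cls a = cls b \<longleftrightarrow> (a,b) \<in> EQ"
proof
  assume "cls a = cls b"
  then have "b \<in> cls a" by (simp add: cls_def)
  then show "(a,b) \<in> EQ" by (simp add: cls_def)
next
  assume ab: "(a,b) \<in> EQ"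
  show "cls a = cls b" unfolding cls_def
    using ab by (auto intro: EQ_sym EQ_trans)
qed

lemma carrier_PG: "carrier PG = cls ` words Gs"
  by (auto simp: presented_group_def quotient_def cls_def)

lemma carrier_PG_E:
  assumes "x \<in> carrier PG" obtains w where "w \<in> words Gs" "x = cls w"
  using assms by (auto simp: carrier_PG)

lemma cls_carrier [simp]: "w \<in> words Gs \<Longrightarrow> cls w \<in> carrier PG"
  by (simp add: carrier_PG)

lemma some_cls: "(w, SOME a. a \<in> cls w) \<in> EQ"
proof -
  have "w \<in> cls w" by (simp add: cls_def)
  then have "(SOME a. a \<in> cls w) \<in> cls w" by (rule someI)
  then show ?thesis by (simp add: cls_def)
qed

lemma mult_cls [simp]: "a \<in> words Gs \<Longrightarrow> b \<in> words Gs \<Longrightarrow> cls a \<otimes>\<^bsub>PG\<^esub> cls b = cls (a @ b)"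
proof -
  assume a: "a \<in> words Gs" and b: "b \<in> words Gs"
  have "(a @ b, (SOME x. x \<in> cls a) @ (SOME x. x \<in> cls b)) \<in> EQ"
    by (rule EQ_append2[OF some_cls some_cls a b])
  then show ?thesis
    by (simp add: presented_group_def cls_def[symmetric] cls_eq EQ_sym)
qed

lemma one_PG: "\<one>\<^bsub>PG\<^esub> = cls []"
  by (simp add: presented_group_def cls_def)

lemma group_PG: "group PG"
proof (rule groupI)
  fix x y assume "x \<in> carrier PG" "y \<in> carrier PG"
  then obtain a b where "a \<in> words Gs" "b \<in> words Gs" "x = cls a" "y = cls b"
    by (metis carrier_PG_E)
  then show "x \<otimes>\<^bsub>PG\<^esub> y \<in> carrier PG" by (simp only: mult_cls) simp
next
  show "\<one>\<^bsub>PG\<^esub> \<in> carrier PG" by (simp add: one_PG)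
next
  fix x y z assume "x \<in> carrier PG" "y \<in> carrier PG" "z \<in> carrier PG"
  then obtain a b c where abc: "a \<in> words Gs" "b \<in> words Gs" "c \<in> words Gs"
    "x = cls a" "y = cls b" "z = cls c"
    by (metis carrier_PG_E)
  have ab: "a @ b \<in> words Gs" "b @ c \<in> words Gs" using abc by auto
  show "x \<otimes>\<^bsub>PG\<^esub> y \<otimes>\<^bsub>PG\<^esub> z = x \<otimes>\<^bsub>PG\<^esub> (y \<otimes>\<^bsub>PG\<^esub> z)"
    unfolding abc(4-6) mult_cls[OF abc(1,2)] mult_cls[OF abc(2,3)] mult_cls[OF ab(1) abc(3)]
      mult_cls[OF abc(1) ab(2)] by simp
next
  fix x assume "x \<in> carrier PG"
  then obtain a where a: "a \<in> words Gs" "x = cls a" by (metis carrier_PG_E)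
  show "\<one>\<^bsub>PG\<^esub> \<otimes>\<^bsub>PG\<^esub> x = x" unfolding a one_PG mult_cls[OF _ a(1), of "[]", simplified] by simp
next
  fix x assume "x \<in> carrier PG"
  then obtain w where w: "w \<in> words Gs" "x = cls w" by (auto simp: carrier_PG)
  show "\<exists>y\<in>carrier PG. y \<otimes>\<^bsub>PG\<^esub> x = \<one>\<^bsub>PG\<^esub>"
    by (rule bexI[of _ "cls (winv w)"]) (use w EQ_winv in \<open>auto simp: one_PG cls_eq\<close>)
qed

lemma inv_cls: "w \<in> words Gs \<Longrightarrow> inv\<^bsub>PG\<^esub> (cls w) = cls (winv w)"
  by (rule group.inv_equality[OF group_PG]) (use EQ_winv in \<open>auto simp: one_PG cls_eq\<close>)

lemma pgen_cls: "pgen Gs R x = cls [(x, False)]"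
  by (simp add: pgen_def cls_def)

lemma pgen_carrier: "x \<in> Gs \<Longrightarrow> pgen Gs R x \<in> carrier PG"
  by (simp add: pgen_cls)

lemma pgen_image: "pgen Gs R ` Gs \<subseteq> carrier PG"
  using pgen_carrier by auto

lemma eval_pgen: "w \<in> words Gs \<Longrightarrow> eval_word PG (pgen Gs R) w = cls w"
proof (induction w)
  case Nil then show ?case by (simp add: one_PG)
next
  case (Cons p w)
  obtain x b where p: "p = (x,b)" by force
  have x: "x \<in> Gs" and w: "w \<in> words Gs" using Cons.prems p by auto
  have "(if b then inv\<^bsub>PG\<^esub> (pgen Gs R x) else pgen Gs R x) = cls [(x,b)]"
    using x by (auto simp: pgen_cls inv_cls)
  then show ?case using Cons w x p by simp
qed

lemma rel_one: "r \<in> R \<Longrightarrow> cls r = \<one>\<^bsub>PG\<^esub>"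
  by (simp add: one_PG cls_eq EQ_rel)

lemma eval_resp:
  assumes G: "group G" and f: "f ` Gs \<subseteq> carrier G"
    and rels: "\<And>r. r \<in> R \<Longrightarrow> eval_word G f r = \<one>\<^bsub>G\<^esub>"
    and ab: "(a,b) \<in> EQ"
  shows "eval_word G f a = eval_word G f b"
proof -
  interpret G: group G by (rule G)
  have st: "eval_word G f a = eval_word G f b" if "(a,b) \<in> pres_step Gs R" for a b
    using that
  proof (cases rule: pres_step.cases)
    case (cancel u v x c)
    have fx: "f x \<in> carrier G" using cancel f by auto
    have e: "eval_word G f [(x,c),(x,\<not> c)] = \<one>\<^bsub>G\<^esub>"
      using fx by auto
    have w: "[(x,c),(x,\<not> c)] \<in> words Gs" using cancel by auto
    have "eval_word G f b = eval_word G f u \<otimes>\<^bsub>G\<^esub> (eval_word G f [(x,c),(x,\<not> c)] \<otimes>\<^bsub>G\<^esub> eval_word G f v)"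
      unfolding cancel using G.eval_word_append[OF f] cancel w
      by (metis append_in_lists_conv)
    then show ?thesis using cancel f e G.eval_word_append[OF f]
      by (simp add: G.eval_word_closed[OF f])
  next
    case (relator u v r)
    have "r \<in> words Gs" using relator R_ok by auto
    then have "eval_word G f b = eval_word G f u \<otimes>\<^bsub>G\<^esub> (eval_word G f r \<otimes>\<^bsub>G\<^esub> eval_word G f v)"
      unfolding relator using G.eval_word_append[OF f] relator
      by (metis append_in_lists_conv)
    then show ?thesis using relator f rels G.eval_word_append[OF f]
      by (simp add: G.eval_word_closed[OF f])
  qed
  show ?thesis using ab unfolding pres_eq_def
    by (induction rule: rtrancl_induct) (auto dest: st)
qed

lemma eval_hom:
  assumes G: "group G" and f: "f ` Gs \<subseteq> carrier G"
    and rels: "\<And>r. r \<in> R \<Longrightarrow> eval_word G f r = \<one>\<^bsub>G\<^esub>"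
  shows "(\<lambda>A. eval_word G f (SOME w. w \<in> A)) \<in> hom PG G"
    and "w \<in> words Gs \<Longrightarrow> eval_word G f (SOME a. a \<in> cls w) = eval_word G f w"
proof -
  interpret G: group G by (rule G)
  have ev: "eval_word G f (SOME a. a \<in> cls w) = eval_word G f w" for w
    using eval_resp[OF G f rels EQ_sym[OF some_cls]] .
  then show "w \<in> words Gs \<Longrightarrow> eval_word G f (SOME a. a \<in> cls w) = eval_word G f w" .
  show "(\<lambda>A. eval_word G f (SOME w. w \<in> A)) \<in> hom PG G"
  proof (rule homI)
    fix x assume "x \<in> carrier PG"
    then obtain a where a: "a \<in> words Gs" "x = cls a" by (metis carrier_PG_E)
    then show "eval_word G f (SOME w. w \<in> x) \<in> carrier G"
      using ev f G.eval_word_closed[OF f a(1)] by auto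
  next
    fix x y assume "x \<in> carrier PG" "y \<in> carrier PG"
    then obtain a b where ab: "a \<in> words Gs" "b \<in> words Gs" "x = cls a" "y = cls b"
      by (metis carrier_PG_E)
    show "eval_word G f (SOME w. w \<in> x \<otimes>\<^bsub>PG\<^esub> y) =
               eval_word G f (SOME w. w \<in> x) \<otimes>\<^bsub>G\<^esub> eval_word G f (SOME w. w \<in> y)"
      unfolding ab(3,4) mult_cls[OF ab(1,2)] ev by (rule G.eval_word_append[OF f ab(1,2)])
  qed
qed

end



lemma (in group) inv_eq_self: "x \<in> carrier G \<Longrightarrow> x \<otimes> x = \<one> \<Longrightarrow> inv x = x"
  using inv_equality by blast

lemma (in group) cancel_simps [simp]:
  "x \<in> carrier G \<Longrightarrow> y \<in> carrier G \<Longrightarrow> x \<otimes> (inv x \<otimes> y) = y"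
  "x \<in> carrier G \<Longrightarrow> y \<in> carrier G \<Longrightarrow> inv x \<otimes> (x \<otimes> y) = y"
  by (simp_all add: m_assoc[symmetric])

lemma rep_words [simp]: "s \<in> S \<Longrightarrow> t \<in> S \<Longrightarrow> concat (replicate k [(s, False), (t, False)]) \<in> words S"
  by (induction k) auto

locale cox =
  fixes S :: "'a set" and m :: "'a \<Rightarrow> 'a \<Rightarrow> enat" and R :: "'a set"
  assumes finS: "finite S"
    and cm: "coxeter_matrix S m"
    and RS: "R \<subseteq> S"
    and reps: "\<forall>x \<in> coxeter_quandle S m. \<exists>!s \<in> R. \<exists>w \<in> carrier (coxeter_group S m).
            x = inv\<^bsub>coxeter_group S m\<^esub> w \<otimes>\<^bsub>coxeter_group S m\<^esub> cox_gen S m s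
                  \<otimes>\<^bsub>coxeter_group S m\<^esub> w"
begin

abbreviation "W \<equiv> coxeter_group S m"
abbreviation "Q \<equiv> coxeter_quandle S m"
abbreviation "AG \<equiv> adjoint_group S m"
abbreviation "gen \<equiv> cox_gen S m"
abbreviation "e \<equiv> ad_gen S m"
abbreviation "phi \<equiv> ad_phi S m"

lemma rels_ok: "cox_rels S m \<subseteq> words S"
proof
  fix r assume "r \<in> cox_rels S m"
  then obtain s t k where "s \<in> S" "t \<in> S" "r = concat (replicate k [(s, False), (t, False)])"
    unfolding cox_rels_def by blast
  then show "r \<in> words S" by (simp only: rep_words)
qed

sublocale Wp: pres S "cox_rels S m"
  by unfold_locales (rule rels_ok)

lemma W_is: "W = Wp.PG" by (simp add: coxeter_group_def)

lemma group_W: "group W" using Wp.group_PG by (simp add: W_is)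

sublocale W: group W by (rule group_W)

lemma gen_cls: "gen s = Wp.cls [(s,False)]"
  by (simp add: cox_gen_def Wp.pgen_cls)

lemma gen_closed [simp]: "s \<in> S \<Longrightarrow> gen s \<in> carrier W"
  by (simp add: gen_cls W_is)

lemma gen_inv_self: assumes s: "s \<in> S" shows "gen s \<otimes>\<^bsub>W\<^esub> gen s = \<one>\<^bsub>W\<^esub>"
proof -
  have "m s s = enat 1" using cm s by (simp add: coxeter_matrix_def one_enat_def)
  then have "concat (replicate 1 [(s, False), (s, False)]) \<in> cox_rels S m"
    unfolding cox_rels_def using s by blast
  then have "Wp.cls [(s, False), (s, False)] = \<one>\<^bsub>W\<^esub>"
    using Wp.rel_one W_is by simp
  moreover have "gen s \<otimes>\<^bsub>W\<^esub> gen s = Wp.cls [(s, False), (s, False)]"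
    using s by (simp add: gen_cls W_is)
  ultimately show ?thesis by simp
qed

lemma gen_inv [simp]: "s \<in> S \<Longrightarrow> inv\<^bsub>W\<^esub> gen s = gen s"
  using W.inv_eq_self gen_inv_self by simp

lemma gen_pow: assumes "s \<in> S" "t \<in> S" "m s t = enat k"
  shows "(gen s \<otimes>\<^bsub>W\<^esub> gen t) [^]\<^bsub>W\<^esub> k = \<one>\<^bsub>W\<^esub>"
proof -
  have st: "gen s \<otimes>\<^bsub>W\<^esub> gen t = Wp.cls [(s, False), (t, False)]"
    using assms by (simp add: gen_cls W_is)
  have "(Wp.cls [(s, False), (t, False)]) [^]\<^bsub>W\<^esub> n = Wp.cls (concat (replicate n [(s, False), (t, False)]))" for n
  proof (induction n)
    case 0 then show ?case by (simp add: W_is Wp.one_PG)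
  next
    case (Suc n)
    have w: "concat (replicate n [(s, False), (t, False)]) \<in> words S" using assms by simp
    have "(Wp.cls [(s, False), (t, False)]) [^]\<^bsub>W\<^esub> Suc n =
          Wp.cls [(s, False), (t, False)] \<otimes>\<^bsub>W\<^esub> (Wp.cls [(s, False), (t, False)]) [^]\<^bsub>W\<^esub> n"
      using W.nat_pow_Suc2 assms by (simp add: W_is)
    then show ?case using Suc w assms by (simp add: W_is)
  qed
  moreover have "concat (replicate k [(s, False), (t, False)]) \<in> cox_rels S m"
    unfolding cox_rels_def using assms by blast
  ultimately show ?thesis using st Wp.rel_one W_is by simp
qed

lemma Q_def': "Q = {inv\<^bsub>W\<^esub> w \<otimes>\<^bsub>W\<^esub> gen s \<otimes>\<^bsub>W\<^esub> w | w s. w \<in> carrier W \<and> s \<in> S}"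
  by (simp add: coxeter_quandle_def)

lemma Q_carrier: "x \<in> Q \<Longrightarrow> x \<in> carrier W"
  by (auto simp: Q_def')

lemma Q_inv_self: assumes "x \<in> Q" shows "x \<otimes>\<^bsub>W\<^esub> x = \<one>\<^bsub>W\<^esub>"
proof -
  obtain w s where ws: "w \<in> carrier W" "s \<in> S" "x = inv\<^bsub>W\<^esub> w \<otimes>\<^bsub>W\<^esub> gen s \<otimes>\<^bsub>W\<^esub> w"
    using assms unfolding Q_def' by blast
  have "x \<otimes>\<^bsub>W\<^esub> x = inv\<^bsub>W\<^esub> w \<otimes>\<^bsub>W\<^esub> (gen s \<otimes>\<^bsub>W\<^esub> (w \<otimes>\<^bsub>W\<^esub> inv\<^bsub>W\<^esub> w) \<otimes>\<^bsub>W\<^esub> gen s) \<otimes>\<^bsub>W\<^esub> w"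
    using ws by (simp add: W.m_assoc)
  also have "\<dots> = \<one>\<^bsub>W\<^esub>" using ws gen_inv_self by (simp add: W.m_assoc)
  finally show ?thesis .
qed

lemma Q_inv [simp]: "x \<in> Q \<Longrightarrow> inv\<^bsub>W\<^esub> x = x"
  using W.inv_eq_self Q_inv_self Q_carrier by simp

lemma Q_conj: assumes "x \<in> Q" "v \<in> carrier W" shows "inv\<^bsub>W\<^esub> v \<otimes>\<^bsub>W\<^esub> x \<otimes>\<^bsub>W\<^esub> v \<in> Q"
proof -
  obtain w s where ws: "w \<in> carrier W" "s \<in> S" "x = inv\<^bsub>W\<^esub> w \<otimes>\<^bsub>W\<^esub> gen s \<otimes>\<^bsub>W\<^esub> w"
    using assms unfolding Q_def' by blast
  have "inv\<^bsub>W\<^esub> v \<otimes>\<^bsub>W\<^esub> x \<otimes>\<^bsub>W\<^esub> v =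
        inv\<^bsub>W\<^esub> (w \<otimes>\<^bsub>W\<^esub> v) \<otimes>\<^bsub>W\<^esub> gen s \<otimes>\<^bsub>W\<^esub> (w \<otimes>\<^bsub>W\<^esub> v)"
    using ws assms by (simp add: W.m_assoc W.inv_mult_group)
  then show ?thesis unfolding Q_def' using ws assms by blast
qed

lemma Q_conj': assumes "x \<in> Q" "v \<in> carrier W" shows "v \<otimes>\<^bsub>W\<^esub> x \<otimes>\<^bsub>W\<^esub> inv\<^bsub>W\<^esub> v \<in> Q"
  using Q_conj[OF assms(1) W.inv_closed[OF assms(2)]] assms by simp

lemma gen_Q: "s \<in> S \<Longrightarrow> gen s \<in> Q"
  unfolding Q_def' by (rule CollectI, rule exI[of _ "\<one>\<^bsub>W\<^esub>"], rule exI[of _ s]) simp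

lemma qop_Q: "x \<in> Q \<Longrightarrow> y \<in> Q \<Longrightarrow> quandle_op S m x y \<in> Q"
  unfolding quandle_op_def by (rule Q_conj) (auto simp: Q_carrier)

lemma adrels_ok: "ad_rels S m \<subseteq> words Q"
  by (auto simp: ad_rels_def qop_Q)

sublocale Ap: pres Q "ad_rels S m"
  by unfold_locales (rule adrels_ok)

lemma AG_is: "AG = Ap.PG" by (simp add: adjoint_group_def)

lemma group_AG: "group AG" using Ap.group_PG by (simp add: AG_is)

sublocale A: group AG by (rule group_AG)

lemma e_cls: "e x = Ap.cls [(x,False)]"
  by (simp add: ad_gen_def Ap.pgen_cls)

lemma e_closed [simp]: "x \<in> Q \<Longrightarrow> e x \<in> carrier AG"
  by (simp add: e_cls AG_is)

lemma e_rel: assumes x: "x \<in> Q" and y: "y \<in> Q"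
  shows "inv\<^bsub>AG\<^esub> e y \<otimes>\<^bsub>AG\<^esub> e x \<otimes>\<^bsub>AG\<^esub> e y = e (quandle_op S m x y)"
proof -
  let ?q = "quandle_op S m x y"
  have q: "?q \<in> Q" using qop_Q x y .
  have r: "[(y, True), (x, False), (y, False), (?q, True)] \<in> ad_rels S m"
    unfolding ad_rels_def using x y by blast
  have w: "[(y, True), (x, False), (y, False), (?q, True)] \<in> words Q" using x y q by auto
  have "eval_word AG e [(y, True), (x, False), (y, False), (?q, True)] = \<one>\<^bsub>AG\<^esub>"
    using Ap.eval_pgen[OF w] Ap.rel_one[OF r] by (simp add: AG_is ad_gen_def[abs_def])
  then have "inv\<^bsub>AG\<^esub> e y \<otimes>\<^bsub>AG\<^esub> e x \<otimes>\<^bsub>AG\<^esub> e y \<otimes>\<^bsub>AG\<^esub> inv\<^bsub>AG\<^esub> e ?q = \<one>\<^bsub>AG\<^esub>"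
    using x y q by (simp add: A.m_assoc)
  then show ?thesis using x y q
    by (metis A.inv_closed A.inv_inv A.inv_solve_right' A.l_one A.m_closed e_closed)
qed

lemma Q_cancel [simp]: "x \<in> Q \<Longrightarrow> z \<in> carrier W \<Longrightarrow> x \<otimes>\<^bsub>W\<^esub> (x \<otimes>\<^bsub>W\<^esub> z) = z"
  using W.m_assoc[symmetric] Q_inv_self Q_carrier by simp

lemma qop_involutive: assumes "x \<in> Q" "y \<in> Q" shows "quandle_op S m (quandle_op S m x y) y = x"
  using assms Q_carrier by (simp add: quandle_op_def W.m_assoc Q_inv_self[OF assms(2)])

lemma e_rel': assumes x: "x \<in> Q" and y: "y \<in> Q"
  shows "e y \<otimes>\<^bsub>AG\<^esub> e x \<otimes>\<^bsub>AG\<^esub> inv\<^bsub>AG\<^esub> e y = e (quandle_op S m x y)"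
proof -
  have "inv\<^bsub>AG\<^esub> e y \<otimes>\<^bsub>AG\<^esub> e (quandle_op S m x y) \<otimes>\<^bsub>AG\<^esub> e y = e x"
    using e_rel[OF qop_Q[OF x y] y] qop_involutive[OF x y] by simp
  then have "e (quandle_op S m x y) \<otimes>\<^bsub>AG\<^esub> e y = e y \<otimes>\<^bsub>AG\<^esub> e x"
    using x y qop_Q[OF x y] by (simp add: A.m_assoc A.inv_solve_left')
  then show ?thesis using x y qop_Q[OF x y] by (simp add: A.inv_solve_right')
qed

lemma phi_hom_aux: "(\<lambda>A. eval_word W id (SOME w. w \<in> A)) \<in> hom Ap.PG W"
  and phi_cls: "w \<in> words Q \<Longrightarrow> eval_word W id (SOME a. a \<in> Ap.cls w) = eval_word W id w"
proof -
  have f: "id ` Q \<subseteq> carrier W" using Q_carrier by auto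
  have rels: "eval_word W id r = \<one>\<^bsub>W\<^esub>" if rr: "r \<in> ad_rels S m" for r
  proof -
    obtain x y where xy: "x \<in> Q" "y \<in> Q" "r = [(y, True), (x, False), (y, False), (quandle_op S m x y, True)]"
      using rr unfolding ad_rels_def by blast
    then show ?thesis using Q_carrier[OF xy(1)] Q_carrier[OF xy(2)] qop_Q[OF xy(1,2)] Q_carrier
      by (simp add: quandle_op_def W.m_assoc Q_inv_self)
  qed
  show "(\<lambda>A. eval_word W id (SOME w. w \<in> A)) \<in> hom Ap.PG W"
    by (rule Ap.eval_hom(1)[OF group_W f rels])
  show "w \<in> words Q \<Longrightarrow> eval_word W id (SOME a. a \<in> Ap.cls w) = eval_word W id w"
    by (rule Ap.eval_hom(2)[OF group_W f rels])
qed

lemma phi_hom: "phi \<in> hom AG W"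
  using phi_hom_aux by (simp add: AG_is ad_phi_def[abs_def])

lemma phi_cls': "w \<in> words Q \<Longrightarrow> phi (Ap.cls w) = eval_word W id w"
  using phi_cls by (simp add: ad_phi_def)

sublocale ph: group_hom AG W phi
  using phi_hom group_AG group_W by (simp add: group_hom_def group_hom_axioms_def)

lemma phi_e [simp]: "x \<in> Q \<Longrightarrow> phi (e x) = x"
  using phi_cls'[of "[(x,False)]"] Q_carrier by (simp add: e_cls)

lemma AG_words: assumes "g \<in> carrier AG"
  obtains a where "a \<in> words Q" "g = eval_word AG e a" "phi g = eval_word W id a"
proof -
  have "g \<in> carrier Ap.PG" using assms AG_is by simp
  then obtain a where a: "a \<in> words Q" "g = Ap.cls a" by (rule Ap.carrier_PG_E)
  have "g = eval_word AG e a" using Ap.eval_pgen[OF a(1)] a by (simp add: AG_is ad_gen_def[abs_def])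
  moreover have "phi g = eval_word W id a" using a phi_cls' by simp
  ultimately show ?thesis using that a(1) by simp
qed

end



lemma (in group) conj_mult:
  "a \<in> carrier G \<Longrightarrow> g \<in> carrier G \<Longrightarrow> z \<in> carrier G \<Longrightarrow>
   a \<otimes> g \<otimes> z \<otimes> inv (a \<otimes> g) = a \<otimes> (g \<otimes> z \<otimes> inv g) \<otimes> inv a"
  by (simp add: m_assoc inv_mult_group)

lemma (in group) comm_inv:
  "c \<in> carrier G \<Longrightarrow> z \<in> carrier G \<Longrightarrow> c \<otimes> z = z \<otimes> c \<Longrightarrow> c \<otimes> inv z = inv z \<otimes> c"
  by (metis inv_solve_left inv_solve_right m_assoc m_closed inv_closed)

lemma eval_word_cong:
  "(\<And>x. x \<in> Gs \<Longrightarrow> f x = g x) \<Longrightarrow> w \<in> words Gs \<Longrightarrow> eval_word G f w = eval_word G g w"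
  by (induction w) auto

context cox
begin

abbreviation "evA a \<equiv> eval_word AG e a"
abbreviation "evW a \<equiv> eval_word W id a"

lemma e_image: "e ` Q \<subseteq> carrier AG" by auto
lemma id_image: "id ` Q \<subseteq> carrier W" using Q_carrier by auto

lemma conj_word:
  "a \<in> words Q \<Longrightarrow> x \<in> Q \<Longrightarrow>
   evA a \<otimes>\<^bsub>AG\<^esub> e x \<otimes>\<^bsub>AG\<^esub> inv\<^bsub>AG\<^esub> (evA a) = e (evW a \<otimes>\<^bsub>W\<^esub> x \<otimes>\<^bsub>W\<^esub> inv\<^bsub>W\<^esub> (evW a))"
proof (induction a arbitrary: x)
  case Nil then show ?case using Q_carrier by simp
next
  case (Cons p a)
  obtain y b where p: "p = (y,b)" by force
  have y: "y \<in> Q" and a: "a \<in> words Q" using Cons.prems p by auto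
  define g where "g = evA a"
  define w where "w = evW a"
  have g: "g \<in> carrier AG" unfolding g_def using A.eval_word_closed[OF e_image a] .
  have w: "w \<in> carrier W" unfolding w_def using W.eval_word_closed[OF id_image a] .
  define x' where "x' = w \<otimes>\<^bsub>W\<^esub> x \<otimes>\<^bsub>W\<^esub> inv\<^bsub>W\<^esub> w"
  have x': "x' \<in> Q" unfolding x'_def using Q_conj'[OF Cons.prems(2) w] .
  have IH: "g \<otimes>\<^bsub>AG\<^esub> e x \<otimes>\<^bsub>AG\<^esub> inv\<^bsub>AG\<^esub> g = e x'"
    unfolding g_def w_def x'_def by (rule Cons.IH[OF a Cons.prems(2)])
  define ey where "ey = (if b then inv\<^bsub>AG\<^esub> e y else e y)"
  have ey: "ey \<in> carrier AG" using y by (simp add: ey_def)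
  have L: "evA (p # a) = ey \<otimes>\<^bsub>AG\<^esub> g" by (simp add: p ey_def g_def)
  have "evA (p # a) \<otimes>\<^bsub>AG\<^esub> e x \<otimes>\<^bsub>AG\<^esub> inv\<^bsub>AG\<^esub> (evA (p # a)) =
        ey \<otimes>\<^bsub>AG\<^esub> e x' \<otimes>\<^bsub>AG\<^esub> inv\<^bsub>AG\<^esub> ey"
    unfolding L A.conj_mult[OF ey g e_closed[OF Cons.prems(2)]] IH ..
  also have "\<dots> = e (quandle_op S m x' y)"
    using e_rel[OF x' y] e_rel'[OF x' y] y by (simp add: ey_def)
  also have "quandle_op S m x' y = evW (p # a) \<otimes>\<^bsub>W\<^esub> x \<otimes>\<^bsub>W\<^esub> inv\<^bsub>W\<^esub> (evW (p # a))"
  proof -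
    have R: "evW (p # a) = y \<otimes>\<^bsub>W\<^esub> w" using y Q_carrier by (simp add: p w_def)
    show ?thesis unfolding R using W.conj_mult[OF Q_carrier[OF y] w Q_carrier[OF Cons.prems(2)]] y
      by (simp add: quandle_op_def x'_def)
  qed
  finally show ?case .
qed

lemma conjA: assumes "g \<in> carrier AG" "x \<in> Q"
  shows "g \<otimes>\<^bsub>AG\<^esub> e x \<otimes>\<^bsub>AG\<^esub> inv\<^bsub>AG\<^esub> g = e (phi g \<otimes>\<^bsub>W\<^esub> x \<otimes>\<^bsub>W\<^esub> inv\<^bsub>W\<^esub> (phi g))"
proof -
  obtain a where a: "a \<in> words Q" "g = evA a" "phi g = evW a" by (rule AG_words[OF assms(1)])
  show ?thesis unfolding a(3) unfolding a(2) by (rule conj_word[OF a(1) assms(2)])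
qed

definition sq where "sq x = e x \<otimes>\<^bsub>AG\<^esub> e x"

lemma sq_closed [simp]: "x \<in> Q \<Longrightarrow> sq x \<in> carrier AG" by (simp add: sq_def)

lemma phi_sq: "x \<in> Q \<Longrightarrow> phi (sq x) = \<one>\<^bsub>W\<^esub>"
  by (simp add: sq_def Q_inv_self)

lemma sq_comm_e: assumes "y \<in> Q" "x \<in> Q" shows "sq y \<otimes>\<^bsub>AG\<^esub> e x = e x \<otimes>\<^bsub>AG\<^esub> sq y"
proof -
  have "sq y \<otimes>\<^bsub>AG\<^esub> e x \<otimes>\<^bsub>AG\<^esub> inv\<^bsub>AG\<^esub> sq y = e x"
    using conjA[OF sq_closed[OF assms(1)] assms(2)] phi_sq[OF assms(1)] Q_carrier[OF assms(2)] by simp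
  then show ?thesis using assms by (simp add: A.inv_solve_right')
qed

lemma sq_central_word: assumes y: "y \<in> Q" shows "a \<in> words Q \<Longrightarrow> sq y \<otimes>\<^bsub>AG\<^esub> evA a = evA a \<otimes>\<^bsub>AG\<^esub> sq y"
proof (induction a)
  case Nil then show ?case using y by simp
next
  case (Cons p a)
  obtain x b where p: "p = (x,b)" by force
  have x: "x \<in> Q" and aa: "a \<in> words Q" using Cons.prems p by auto
  define ex where "ex = (if b then inv\<^bsub>AG\<^esub> e x else e x)"
  have ex: "ex \<in> carrier AG" using x by (simp add: ex_def)
  have c1: "sq y \<otimes>\<^bsub>AG\<^esub> e x = e x \<otimes>\<^bsub>AG\<^esub> sq y" by (rule sq_comm_e[OF y x])
  have c: "sq y \<otimes>\<^bsub>AG\<^esub> ex = ex \<otimes>\<^bsub>AG\<^esub> sq y"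
  proof (cases b)
    case True then show ?thesis unfolding ex_def using A.comm_inv[OF sq_closed[OF y] e_closed[OF x] c1] by simp
  next
    case False then show ?thesis unfolding ex_def using c1 by simp
  qed
  have ev: "evA a \<in> carrier AG" using A.eval_word_closed[OF e_image aa] .
  have L: "evA (p # a) = ex \<otimes>\<^bsub>AG\<^esub> evA a" by (simp add: p ex_def)
  have sy: "sq y \<in> carrier AG" using y by simp
  have "sq y \<otimes>\<^bsub>AG\<^esub> (ex \<otimes>\<^bsub>AG\<^esub> evA a) = (sq y \<otimes>\<^bsub>AG\<^esub> ex) \<otimes>\<^bsub>AG\<^esub> evA a"
    using sy ex ev by (simp only: A.m_assoc)
  also have "\<dots> = ex \<otimes>\<^bsub>AG\<^esub> (sq y \<otimes>\<^bsub>AG\<^esub> evA a)" unfolding c using sy ex ev by (simp only: A.m_assoc)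
  also have "\<dots> = (ex \<otimes>\<^bsub>AG\<^esub> evA a) \<otimes>\<^bsub>AG\<^esub> sq y" unfolding Cons.IH[OF aa] using sy ex ev by (simp only: A.m_assoc)
  finally show ?case unfolding L .
qed

lemma sq_central: assumes "y \<in> Q" "g \<in> carrier AG" shows "sq y \<otimes>\<^bsub>AG\<^esub> g = g \<otimes>\<^bsub>AG\<^esub> sq y"
proof -
  obtain a where a: "a \<in> words Q" "g = evA a" "phi g = evW a" by (rule AG_words[OF assms(2)])
  show ?thesis unfolding a(2) by (rule sq_central_word[OF assms(1) a(1)])
qed

definition E where "E z = eval_word AG (\<lambda>s. e (gen s)) z"

lemma eg_image: "(\<lambda>s. e (gen s)) ` S \<subseteq> carrier AG" using gen_Q by auto

lemma E_closed [simp]: "z \<in> words S \<Longrightarrow> E z \<in> carrier AG"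
  unfolding E_def using A.eval_word_closed[OF eg_image] by blast

lemma E_append: "u \<in> words S \<Longrightarrow> v \<in> words S \<Longrightarrow> E (u @ v) = E u \<otimes>\<^bsub>AG\<^esub> E v"
  unfolding E_def by (rule A.eval_word_append[OF eg_image])

lemma E_winv: "u \<in> words S \<Longrightarrow> E (winv u) = inv\<^bsub>AG\<^esub> E u"
  unfolding E_def by (rule A.eval_word_winv[OF eg_image])

lemma phi_E: assumes "z \<in> words S" shows "phi (E z) = Wp.cls z"
proof -
  have "phi (E z) = eval_word W (phi \<circ> (\<lambda>s. e (gen s))) z"
    unfolding E_def by (rule eval_word_hom[OF group_AG group_W phi_hom eg_image assms])
  also have "\<dots> = eval_word W (pgen S (cox_rels S m)) z"
    by (rule eval_word_cong[OF _ assms]) (metis comp_apply phi_e gen_Q cox_gen_def)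
  also have "\<dots> = Wp.cls z" using Wp.eval_pgen[OF assms] W_is by simp
  finally show ?thesis .
qed

lemma phi_surj: assumes "w \<in> carrier W" obtains z where "z \<in> words S" "phi (E z) = w"
proof -
  have "w \<in> carrier Wp.PG" using assms W_is by simp
  then obtain z where z: "z \<in> words S" "w = Wp.cls z" by (rule Wp.carrier_PG_E)
  then have "phi (E z) = w" using phi_E by simp
  then show ?thesis using that z(1) by simp
qed

lemma sq_conj: assumes x: "x \<in> Q" and v: "v \<in> carrier W"
  shows "sq (inv\<^bsub>W\<^esub> v \<otimes>\<^bsub>W\<^esub> x \<otimes>\<^bsub>W\<^esub> v) = sq x"
proof -
  obtain z where z: "z \<in> words S" "phi (E z) = inv\<^bsub>W\<^esub> v" by (rule phi_surj[OF W.inv_closed[OF v]])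
  define g where "g = E z"
  have g: "g \<in> carrier AG" using z by (simp add: g_def)
  have 1: "e (inv\<^bsub>W\<^esub> v \<otimes>\<^bsub>W\<^esub> x \<otimes>\<^bsub>W\<^esub> v) = g \<otimes>\<^bsub>AG\<^esub> e x \<otimes>\<^bsub>AG\<^esub> inv\<^bsub>AG\<^esub> g"
    using conjA[OF g x] z v by (simp add: g_def)
  have "sq (inv\<^bsub>W\<^esub> v \<otimes>\<^bsub>W\<^esub> x \<otimes>\<^bsub>W\<^esub> v) = g \<otimes>\<^bsub>AG\<^esub> sq x \<otimes>\<^bsub>AG\<^esub> inv\<^bsub>AG\<^esub> g"
    unfolding sq_def 1 using g x by (simp add: A.m_assoc)
  also have "\<dots> = sq x" using sq_central[OF x A.inv_closed[OF g]] g x by (simp add: A.m_assoc)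
  finally show ?thesis .
qed




end



context cox
begin

lemma e_gen_E: "s \<in> S \<Longrightarrow> E [(s, b)] = (if b then inv\<^bsub>AG\<^esub> e (gen s) else e (gen s))"
  using gen_Q by (simp add: E_def)

lemma e_in_E: assumes x: "x \<in> Q"
  shows "\<exists>z \<in> words S. e x = E z" "\<exists>z \<in> words S. inv\<^bsub>AG\<^esub> e x = E z"
proof -
  obtain w s where ws: "w \<in> carrier W" "s \<in> S" "x = inv\<^bsub>W\<^esub> w \<otimes>\<^bsub>W\<^esub> gen s \<otimes>\<^bsub>W\<^esub> w"
    using x unfolding Q_def' by blast
  obtain z where z: "z \<in> words S" "phi (E z) = inv\<^bsub>W\<^esub> w" by (rule phi_surj[OF W.inv_closed[OF ws(1)]])
  have Ez: "E z \<in> carrier AG" using z by simp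
  have es: "e (gen s) \<in> carrier AG" using gen_Q ws by simp
  have 1: "e x = E z \<otimes>\<^bsub>AG\<^esub> e (gen s) \<otimes>\<^bsub>AG\<^esub> inv\<^bsub>AG\<^esub> E z"
    using conjA[OF Ez gen_Q[OF ws(2)]] z ws by simp
  have sw: "[(s, False)] \<in> words S" "[(s, True)] \<in> words S" using ws by auto
  have Eb: "E (z @ ([(s, b)] @ winv z)) = E z \<otimes>\<^bsub>AG\<^esub> (E [(s, b)] \<otimes>\<^bsub>AG\<^esub> inv\<^bsub>AG\<^esub> E z)" for b
  proof -
    have sb: "[(s, b)] \<in> words S" using ws by auto
    show ?thesis
      using E_append[OF z(1), of "[(s, b)] @ winv z"] E_append[OF sb, of "winv z"] E_winv[OF z(1)] z(1) sb
      by simp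
  qed
  have "e x = E (z @ [(s, False)] @ winv z)"
    unfolding 1 Eb using z sw Ez es by (simp add: e_gen_E ws A.m_assoc)
  then show "\<exists>z \<in> words S. e x = E z" using z sw by (intro bexI[of _ "z @ [(s, False)] @ winv z"]) auto
  have "inv\<^bsub>AG\<^esub> e x = E z \<otimes>\<^bsub>AG\<^esub> inv\<^bsub>AG\<^esub> e (gen s) \<otimes>\<^bsub>AG\<^esub> inv\<^bsub>AG\<^esub> E z"
    unfolding 1 using Ez es by (simp add: A.inv_mult_group A.m_assoc)
  also have "\<dots> = E (z @ [(s, True)] @ winv z)"
    unfolding Eb using z sw Ez es by (simp add: e_gen_E ws A.m_assoc)
  finally show "\<exists>z \<in> words S. inv\<^bsub>AG\<^esub> e x = E z" using z sw
    by (intro bexI[of _ "z @ [(s, True)] @ winv z"]) auto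
qed

lemma AG_E: assumes "g \<in> carrier AG" obtains z where "z \<in> words S" "g = E z"
proof -
  obtain a where a: "a \<in> words Q" "g = evA a" "phi g = evW a" by (rule AG_words[OF assms])
  have "a \<in> words Q \<Longrightarrow> \<exists>z \<in> words S. evA a = E z"
  proof (induction a)
    case Nil then show ?case by (intro bexI[of _ "[]"]) (auto simp: E_def)
  next
    case (Cons p a)
    obtain x b where p: "p = (x,b)" by force
    have x: "x \<in> Q" and aa: "a \<in> words Q" using Cons.prems p by auto
    obtain z where z: "z \<in> words S" "evA a = E z" using Cons.IH[OF aa] by auto
    obtain z' where z': "z' \<in> words S" "(if b then inv\<^bsub>AG\<^esub> e x else e x) = E z'"
      using e_in_E[OF x] by (cases b) auto
    have "evA (p # a) = E (z' @ z)" using z z' by (simp add: p E_append)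
    then show ?case using z z' by (intro bexI[of _ "z' @ z"]) simp_all
  qed
  then show ?thesis using a that by auto
qed

definition K where "K = kernel AG W phi"
definition Zc where "Zc = {g \<in> K. \<forall>h \<in> carrier AG. g \<otimes>\<^bsub>AG\<^esub> h = h \<otimes>\<^bsub>AG\<^esub> g}"
abbreviation "Cg \<equiv> AG\<lparr>carrier := Zc\<rparr>"

lemma K_sub: "subgroup K AG" unfolding K_def by (rule ph.subgroup_kernel)

lemma Zc_K: "Zc \<subseteq> K" by (auto simp: Zc_def)
lemma K_carrier: "K \<subseteq> carrier AG" by (auto simp: K_def kernel_def)

lemma Zc_sub: "subgroup Zc AG"
proof (rule A.subgroupI)
  show "Zc \<subseteq> carrier AG" using Zc_K K_carrier by auto
  show "Zc \<noteq> {}" using subgroup.one_closed[OF K_sub] by (auto simp: Zc_def)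
next
  fix a assume a: "a \<in> Zc"
  then have aK: "a \<in> K" and ac: "a \<in> carrier AG" using Zc_K K_carrier by auto
  have "inv\<^bsub>AG\<^esub> a \<in> K" using subgroup.m_inv_closed[OF K_sub aK] .
  moreover have "inv\<^bsub>AG\<^esub> a \<otimes>\<^bsub>AG\<^esub> h = h \<otimes>\<^bsub>AG\<^esub> inv\<^bsub>AG\<^esub> a" if h: "h \<in> carrier AG" for h
  proof -
    have "a \<otimes>\<^bsub>AG\<^esub> h = h \<otimes>\<^bsub>AG\<^esub> a" using a h by (auto simp: Zc_def)
    then show ?thesis using A.comm_inv[OF h ac] ac h by simp
  qed
  ultimately show "inv\<^bsub>AG\<^esub> a \<in> Zc" by (auto simp: Zc_def)
next
  fix a b assume a: "a \<in> Zc" and b: "b \<in> Zc"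
  then have aK: "a \<in> K" "b \<in> K" and ac: "a \<in> carrier AG" "b \<in> carrier AG" using Zc_K K_carrier by auto
  have "a \<otimes>\<^bsub>AG\<^esub> b \<in> K" using subgroup.m_closed[OF K_sub aK] .
  moreover have "a \<otimes>\<^bsub>AG\<^esub> b \<otimes>\<^bsub>AG\<^esub> h = h \<otimes>\<^bsub>AG\<^esub> (a \<otimes>\<^bsub>AG\<^esub> b)" if h: "h \<in> carrier AG" for h
  proof -
    have 1: "a \<otimes>\<^bsub>AG\<^esub> h = h \<otimes>\<^bsub>AG\<^esub> a" "b \<otimes>\<^bsub>AG\<^esub> h = h \<otimes>\<^bsub>AG\<^esub> b" using a b h by (auto simp: Zc_def)
    have "a \<otimes>\<^bsub>AG\<^esub> b \<otimes>\<^bsub>AG\<^esub> h = a \<otimes>\<^bsub>AG\<^esub> (h \<otimes>\<^bsub>AG\<^esub> b)" using 1 ac h by (simp add: A.m_assoc)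
    also have "\<dots> = h \<otimes>\<^bsub>AG\<^esub> (a \<otimes>\<^bsub>AG\<^esub> b)" using 1 ac h by (simp add: A.m_assoc[symmetric])
    finally show ?thesis .
  qed
  ultimately show "a \<otimes>\<^bsub>AG\<^esub> b \<in> Zc" by (auto simp: Zc_def)
qed

lemma comm_Cg: "comm_group Cg"
proof -
  interpret Cgg: group Cg using subgroup.subgroup_is_group[OF Zc_sub group_AG] .
  show ?thesis
  proof (rule Cgg.group_comm_groupI)
    fix x y assume "x \<in> carrier Cg" "y \<in> carrier Cg"
    then have "x \<in> Zc" "y \<in> carrier AG" using Zc_K K_carrier by auto
    then show "x \<otimes>\<^bsub>Cg\<^esub> y = y \<otimes>\<^bsub>Cg\<^esub> x" by (auto simp: Zc_def)
  qed
qed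

sublocale Cg: comm_group Cg by (rule comm_Cg)

lemma Zc_central: "z \<in> Zc \<Longrightarrow> h \<in> carrier AG \<Longrightarrow> z \<otimes>\<^bsub>AG\<^esub> h = h \<otimes>\<^bsub>AG\<^esub> z"
  by (auto simp: Zc_def)

lemma Zc_carrier: "z \<in> Zc \<Longrightarrow> z \<in> carrier AG"
  using Zc_K K_carrier by auto

lemma sq_Zc: "x \<in> Q \<Longrightarrow> sq x \<in> Zc"
  using sq_central phi_sq by (auto simp: Zc_def K_def kernel_def)

lemma sqgen_Zc [simp]: "s \<in> S \<Longrightarrow> sq (gen s) \<in> Zc"
  using sq_Zc gen_Q by simp

lemma pow_Zc [simp]: "z \<in> Zc \<Longrightarrow> z [^]\<^bsub>Cg\<^esub> (i::int) \<in> Zc"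
  using Cg.int_pow_closed[of z i] by simp

lemma one_Zc [simp]: "\<one>\<^bsub>AG\<^esub> \<in> Zc"
  using Cg.one_closed by simp

lemma mult_Zc [simp]: "a \<in> Zc \<Longrightarrow> b \<in> Zc \<Longrightarrow> a \<otimes>\<^bsub>AG\<^esub> b \<in> Zc"
  using Cg.m_closed[of a b] by simp

definition F :: "('a \<Rightarrow> int) \<Rightarrow> (('a \<times> bool) list set \<times> bool) list set" where
  "F f = finprod Cg (\<lambda>s. sq (gen s) [^]\<^bsub>Cg\<^esub> f s) R"

lemma finR: "finite R" using finS RS finite_subset by auto

lemma F_Pi: "(\<lambda>s. sq (gen s) [^]\<^bsub>Cg\<^esub> (f s :: int)) \<in> R \<rightarrow> carrier Cg"
proof (rule Pi_I)
  fix x assume "x \<in> R"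
  then have "x \<in> S" using RS by auto
  then have "sq (gen x) [^]\<^bsub>Cg\<^esub> f x \<in> Zc" by (rule pow_Zc[OF sqgen_Zc])
  then show "sq (gen x) [^]\<^bsub>Cg\<^esub> f x \<in> carrier Cg" by simp
qed

lemma F_closed: "F f \<in> Zc"
  using Cg.finprod_closed[OF F_Pi] by (simp add: F_def)

lemma F_add: "F (\<lambda>s. f s + g s) = F f \<otimes>\<^bsub>AG\<^esub> F g"
proof -
  have "F (\<lambda>s. f s + g s) = finprod Cg (\<lambda>s. sq (gen s) [^]\<^bsub>Cg\<^esub> f s \<otimes>\<^bsub>Cg\<^esub> sq (gen s) [^]\<^bsub>Cg\<^esub> g s) R"
    unfolding F_def by (rule Cg.finprod_cong') (use RS in \<open>simp_all add: Cg.int_pow_mult Pi_def subset_iff\<close>)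
  also have "\<dots> = F f \<otimes>\<^bsub>Cg\<^esub> F g" unfolding F_def by (rule Cg.finprod_multf[OF F_Pi F_Pi])
  finally show ?thesis by simp
qed

lemma F_zero: "F (\<lambda>s. 0) = \<one>\<^bsub>AG\<^esub>"
  using Cg.finprod_one[of R] by (simp add: F_def)

lemma F_neg: "F (\<lambda>s. - f s) = inv\<^bsub>AG\<^esub> F f"
proof -
  have "F f \<otimes>\<^bsub>AG\<^esub> F (\<lambda>s. - f s) = \<one>\<^bsub>AG\<^esub>" using F_add[of f "\<lambda>s. - f s"] F_zero by simp
  then show ?thesis using F_closed Zc_carrier
    by (metis A.inv_equality A.m_closed A.l_inv A.r_one A.inv_closed A.m_assoc A.l_one)
qed

lemma F_restrict: "F (restrict f R) = F f"
  unfolding F_def by (rule Cg.finprod_cong') (use RS in \<open>simp_all add: Pi_def subset_iff\<close>)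

definition N where "N = F ` (R \<rightarrow>\<^sub>E UNIV)"

lemma N_Zc: "N \<subseteq> Zc" using F_closed by (auto simp: N_def)

lemma N_F: "F f \<in> N"
  unfolding N_def F_restrict[of f, symmetric] by (rule imageI) auto

lemma N_one: "\<one>\<^bsub>AG\<^esub> \<in> N" using N_F[of "\<lambda>s. 0"] F_zero by simp

lemma N_mult: assumes "n1 \<in> N" "n2 \<in> N" shows "n1 \<otimes>\<^bsub>AG\<^esub> n2 \<in> N"
proof -
  obtain f g where "n1 = F f" "n2 = F g" using assms by (auto simp: N_def)
  then show ?thesis using N_F[of "\<lambda>s. f s + g s"] F_add[of f g] by simp
qed

lemma N_inv: assumes "n \<in> N" shows "inv\<^bsub>AG\<^esub> n \<in> N"
proof -
  obtain f where "n = F f" using assms by (auto simp: N_def)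
  then show ?thesis using N_F[of "\<lambda>s. - f s"] F_neg[of f] by simp
qed

lemma N_carrier: "n \<in> N \<Longrightarrow> n \<in> carrier AG" using N_Zc Zc_carrier by auto
lemma N_central: "n \<in> N \<Longrightarrow> h \<in> carrier AG \<Longrightarrow> n \<otimes>\<^bsub>AG\<^esub> h = h \<otimes>\<^bsub>AG\<^esub> n"
  using N_Zc Zc_central by auto

lemma F_delta: assumes s: "s \<in> R" shows "F (\<lambda>t. if t = s then 1 else 0) = sq (gen s)"
proof -
  have "F (\<lambda>t. if t = s then 1 else 0) = finprod Cg (\<lambda>t. if s = t then sq (gen t) else \<one>\<^bsub>Cg\<^esub>) R"
    unfolding F_def by (rule Cg.finprod_cong') (use RS in \<open>simp_all add: Pi_def subset_iff\<close>)
  also have "\<dots> = sq (gen s)"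
    using Cg.finprod_singleton[OF s finR, of "\<lambda>t. sq (gen t)"] RS s by (simp add: Pi_def subset_iff)
  finally show ?thesis .
qed

lemma sq_N: assumes x: "x \<in> Q" shows "sq x \<in> N"
proof -
  obtain s w where sw: "s \<in> R" "w \<in> carrier W" "x = inv\<^bsub>W\<^esub> w \<otimes>\<^bsub>W\<^esub> gen s \<otimes>\<^bsub>W\<^esub> w"
    using reps x by metis
  have "sq x = sq (gen s)" using sq_conj[OF gen_Q sw(2)] sw RS by auto
  then show ?thesis using F_delta[OF sw(1)] N_F by metis
qed

end



context cox
begin

lemma N_phi: "n \<in> N \<Longrightarrow> phi n = \<one>\<^bsub>W\<^esub>"
  using N_Zc Zc_K by (auto simp: K_def kernel_def)

lemma E_rep: assumes "s \<in> S" "t \<in> S"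
  shows "E (concat (replicate k [(s, False), (t, False)])) = (e (gen s) \<otimes>\<^bsub>AG\<^esub> e (gen t)) [^]\<^bsub>AG\<^esub> k"
proof (induction k)
  case 0 then show ?case by (simp add: E_def)
next
  case (Suc k)
  have w: "[(s, False), (t, False)] \<in> words S" "concat (replicate k [(s, False), (t, False)]) \<in> words S"
    using assms by auto
  have 1: "E (concat (replicate (Suc k) [(s, False), (t, False)])) =
        E [(s, False), (t, False)] \<otimes>\<^bsub>AG\<^esub> E (concat (replicate k [(s, False), (t, False)]))"
    using E_append[OF w] by simp
  have 2: "E [(s, False), (t, False)] = e (gen s) \<otimes>\<^bsub>AG\<^esub> e (gen t)"
    using assms gen_Q by (simp add: E_def)
  show ?case unfolding 1 2 Suc.IH
    by (rule A.nat_pow_Suc2[symmetric]) (use assms gen_Q in simp)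
qed

lemma dihedral: assumes s: "s \<in> S" and t: "t \<in> S" and k: "m s t = enat k"
  shows "E (concat (replicate k [(s, False), (t, False)])) \<in> N"
proof -
  define a where "a = e (gen s)"
  define b where "b = e (gen t)"
  define c where "c = a \<otimes>\<^bsub>AG\<^esub> b"
  have gs: "gen s \<in> Q" and gt: "gen t \<in> Q" using gen_Q s t by auto
  have a: "a \<in> carrier AG" and b: "b \<in> carrier AG" and c: "c \<in> carrier AG"
    using gs gt by (auto simp: a_def b_def c_def)
  have sqs: "sq (gen s) \<in> N" and sqt: "sq (gen t) \<in> N" using sq_N gs gt by auto
  have sqsc: "sq (gen s) \<in> carrier AG" and sqtc: "sq (gen t) \<in> carrier AG" using gs gt by auto
  have key: "inv\<^bsub>AG\<^esub> c \<otimes>\<^bsub>AG\<^esub> (sq (gen t) \<otimes>\<^bsub>AG\<^esub> sq (gen s)) = b \<otimes>\<^bsub>AG\<^esub> a"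
  proof -
    have cm: "inv\<^bsub>AG\<^esub> a \<otimes>\<^bsub>AG\<^esub> sq (gen t) = sq (gen t) \<otimes>\<^bsub>AG\<^esub> inv\<^bsub>AG\<^esub> a"
      using N_central[OF sqt A.inv_closed[OF a]] by simp
    have "inv\<^bsub>AG\<^esub> c \<otimes>\<^bsub>AG\<^esub> (sq (gen t) \<otimes>\<^bsub>AG\<^esub> sq (gen s)) =
          inv\<^bsub>AG\<^esub> b \<otimes>\<^bsub>AG\<^esub> ((inv\<^bsub>AG\<^esub> a \<otimes>\<^bsub>AG\<^esub> sq (gen t)) \<otimes>\<^bsub>AG\<^esub> sq (gen s))"
      using a b sqsc sqtc by (simp add: c_def A.inv_mult_group A.m_assoc)
    also have "\<dots> = (inv\<^bsub>AG\<^esub> b \<otimes>\<^bsub>AG\<^esub> sq (gen t)) \<otimes>\<^bsub>AG\<^esub> (inv\<^bsub>AG\<^esub> a \<otimes>\<^bsub>AG\<^esub> sq (gen s))"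
      unfolding cm using a b sqsc sqtc by (simp add: A.m_assoc)
    also have "\<dots> = b \<otimes>\<^bsub>AG\<^esub> a"
      using a b by (simp add: sq_def a_def[symmetric] b_def[symmetric] A.m_assoc[symmetric])
    finally show ?thesis .
  qed
  define P where "P n \<longleftrightarrow> (\<exists>x \<in> Q. \<exists>n1 \<in> N. c [^]\<^bsub>AG\<^esub> (n::nat) \<otimes>\<^bsub>AG\<^esub> a = e x \<otimes>\<^bsub>AG\<^esub> n1)" for n
  have step: "P (Suc (Suc n))" if Pn: "P n" for n
  proof -
    from Pn[unfolded P_def] obtain x where x: "x \<in> Q" and
      ex1: "\<exists>n1 \<in> N. c [^]\<^bsub>AG\<^esub> n \<otimes>\<^bsub>AG\<^esub> a = e x \<otimes>\<^bsub>AG\<^esub> n1" ..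
    from ex1 obtain n1 where n1: "n1 \<in> N" and eq: "c [^]\<^bsub>AG\<^esub> n \<otimes>\<^bsub>AG\<^esub> a = e x \<otimes>\<^bsub>AG\<^esub> n1" ..
    have n1c: "n1 \<in> carrier AG" using N_carrier[OF n1] .
    have ex: "e x \<in> carrier AG" using x by simp
    define Y where "Y = sq (gen t) \<otimes>\<^bsub>AG\<^esub> sq (gen s)"
    have Y: "Y \<in> carrier AG" "Y \<in> N" using sqsc sqtc sqs sqt N_mult by (auto simp: Y_def)
    have "c [^]\<^bsub>AG\<^esub> Suc (Suc n) \<otimes>\<^bsub>AG\<^esub> a = c \<otimes>\<^bsub>AG\<^esub> (c [^]\<^bsub>AG\<^esub> n \<otimes>\<^bsub>AG\<^esub> a) \<otimes>\<^bsub>AG\<^esub> (b \<otimes>\<^bsub>AG\<^esub> a)"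
    proof -
      have "c [^]\<^bsub>AG\<^esub> Suc (Suc n) = c \<otimes>\<^bsub>AG\<^esub> (c [^]\<^bsub>AG\<^esub> n \<otimes>\<^bsub>AG\<^esub> c)"
        using A.nat_pow_Suc2[of c "Suc n"] c by simp
      then show ?thesis using a b c by (simp add: A.m_assoc c_def)
    qed
    also have "\<dots> = c \<otimes>\<^bsub>AG\<^esub> (e x \<otimes>\<^bsub>AG\<^esub> n1) \<otimes>\<^bsub>AG\<^esub> (inv\<^bsub>AG\<^esub> c \<otimes>\<^bsub>AG\<^esub> Y)"
      unfolding eq Y_def key ..
    also have "\<dots> = c \<otimes>\<^bsub>AG\<^esub> e x \<otimes>\<^bsub>AG\<^esub> (n1 \<otimes>\<^bsub>AG\<^esub> inv\<^bsub>AG\<^esub> c) \<otimes>\<^bsub>AG\<^esub> Y"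
      using c ex n1c Y by (simp add: A.m_assoc)
    also have "\<dots> = c \<otimes>\<^bsub>AG\<^esub> e x \<otimes>\<^bsub>AG\<^esub> (inv\<^bsub>AG\<^esub> c \<otimes>\<^bsub>AG\<^esub> n1) \<otimes>\<^bsub>AG\<^esub> Y"
      using N_central[OF n1 A.inv_closed[OF c]] by simp
    also have "\<dots> = (c \<otimes>\<^bsub>AG\<^esub> e x \<otimes>\<^bsub>AG\<^esub> inv\<^bsub>AG\<^esub> c) \<otimes>\<^bsub>AG\<^esub> (n1 \<otimes>\<^bsub>AG\<^esub> Y)"
      using c ex n1c Y by (simp add: A.m_assoc)
    also have "c \<otimes>\<^bsub>AG\<^esub> e x \<otimes>\<^bsub>AG\<^esub> inv\<^bsub>AG\<^esub> c = e (phi c \<otimes>\<^bsub>W\<^esub> x \<otimes>\<^bsub>W\<^esub> inv\<^bsub>W\<^esub> (phi c))"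
      by (rule conjA[OF c x])
    finally have eq2: "c [^]\<^bsub>AG\<^esub> Suc (Suc n) \<otimes>\<^bsub>AG\<^esub> a = e (phi c \<otimes>\<^bsub>W\<^esub> x \<otimes>\<^bsub>W\<^esub> inv\<^bsub>W\<^esub> (phi c)) \<otimes>\<^bsub>AG\<^esub> (n1 \<otimes>\<^bsub>AG\<^esub> Y)" .
    have XQ: "phi c \<otimes>\<^bsub>W\<^esub> x \<otimes>\<^bsub>W\<^esub> inv\<^bsub>W\<^esub> (phi c) \<in> Q"
      using Q_conj'[OF x ph.hom_closed[OF c]] .
    have nN: "n1 \<otimes>\<^bsub>AG\<^esub> Y \<in> N" using N_mult[OF n1 Y(2)] .
    show ?thesis unfolding P_def
      by (rule bexI[of _ "phi c \<otimes>\<^bsub>W\<^esub> x \<otimes>\<^bsub>W\<^esub> inv\<^bsub>W\<^esub> (phi c)"], rule bexI[of _ "n1 \<otimes>\<^bsub>AG\<^esub> Y"])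
        (rule eq2, rule nN, rule XQ)
  qed
  have P0: "P 0" unfolding P_def using gs N_one a by (intro bexI[of _ "gen s"] bexI[of _ "\<one>\<^bsub>AG\<^esub>"]) (simp_all add: a_def)
  have P1: "P 1"
  proof -
    have "c [^]\<^bsub>AG\<^esub> (1::nat) \<otimes>\<^bsub>AG\<^esub> a = (a \<otimes>\<^bsub>AG\<^esub> b \<otimes>\<^bsub>AG\<^esub> inv\<^bsub>AG\<^esub> a) \<otimes>\<^bsub>AG\<^esub> sq (gen s)"
      using a b by (simp add: c_def sq_def a_def[symmetric] A.m_assoc)
    also have "a \<otimes>\<^bsub>AG\<^esub> b \<otimes>\<^bsub>AG\<^esub> inv\<^bsub>AG\<^esub> a = e (quandle_op S m (gen t) (gen s))"
      unfolding a_def b_def by (rule e_rel'[OF gt gs])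
    finally have eq1: "c [^]\<^bsub>AG\<^esub> (1::nat) \<otimes>\<^bsub>AG\<^esub> a = e (quandle_op S m (gen t) (gen s)) \<otimes>\<^bsub>AG\<^esub> sq (gen s)" .
    show ?thesis unfolding P_def
      by (rule bexI[of _ "quandle_op S m (gen t) (gen s)"], rule bexI[of _ "sq (gen s)"])
        (rule eq1, rule sqs, rule qop_Q[OF gt gs])
  qed
  have "P n \<and> P (Suc n)" for n
    by (induction n) (use P0 P1 step in auto)
  then have "P k" by simp
  from this[unfolded P_def] obtain x where x: "x \<in> Q" and
    ex1: "\<exists>n1 \<in> N. c [^]\<^bsub>AG\<^esub> k \<otimes>\<^bsub>AG\<^esub> a = e x \<otimes>\<^bsub>AG\<^esub> n1" ..
  from ex1 obtain n1 where n1: "n1 \<in> N" and eq: "c [^]\<^bsub>AG\<^esub> k \<otimes>\<^bsub>AG\<^esub> a = e x \<otimes>\<^bsub>AG\<^esub> n1" ..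
  have n1c: "n1 \<in> carrier AG" using N_carrier[OF n1] .
  have "phi (c [^]\<^bsub>AG\<^esub> k \<otimes>\<^bsub>AG\<^esub> a) = (gen s \<otimes>\<^bsub>W\<^esub> gen t) [^]\<^bsub>W\<^esub> k \<otimes>\<^bsub>W\<^esub> gen s"
    using a c gs gt by (simp add: ph.hom_nat_pow c_def a_def b_def)
  also have "\<dots> = gen s" using gen_pow[OF s t k] s by simp
  finally have "phi (e x \<otimes>\<^bsub>AG\<^esub> n1) = gen s" unfolding eq .
  then have "x = gen s" using x n1c N_phi[OF n1] Q_carrier[OF x] by simp
  then have "c [^]\<^bsub>AG\<^esub> k \<otimes>\<^bsub>AG\<^esub> a = n1 \<otimes>\<^bsub>AG\<^esub> a"
    using eq N_central[OF n1 a] by (simp add: a_def)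
  then have "c [^]\<^bsub>AG\<^esub> k = n1" using a c n1c by (simp add: A.r_cancel)
  then show ?thesis using E_rep[OF s t] n1 by (simp add: c_def a_def b_def)
qed

lemma rel_N: assumes "r \<in> cox_rels S m" shows "E r \<in> N"
proof -
  from assms obtain s t k where "s \<in> S" "t \<in> S" "m s t = enat k" "r = concat (replicate k [(s, False), (t, False)])"
    unfolding cox_rels_def mem_Collect_eq by (elim exE conjE)
  then show ?thesis using dihedral by simp
qed

lemma step_N: assumes "(y, z) \<in> pres_step S (cox_rels S m)"
  shows "\<exists>n \<in> N. E y = E z \<otimes>\<^bsub>AG\<^esub> n" "\<exists>n \<in> N. E z = E y \<otimes>\<^bsub>AG\<^esub> n"
proof -
  have "(\<exists>n \<in> N. E y = E z \<otimes>\<^bsub>AG\<^esub> n) \<and> (\<exists>n \<in> N. E z = E y \<otimes>\<^bsub>AG\<^esub> n)"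
    using assms
  proof (cases rule: pres_step.cases)
    case (cancel u v x c)
    have w: "[(x, c), (x, \<not> c)] \<in> words S" using cancel by auto
    have e1: "E [(x, c), (x, \<not> c)] = \<one>\<^bsub>AG\<^esub>" using cancel gen_Q by (simp add: E_def)
    have "E z = E u \<otimes>\<^bsub>AG\<^esub> (E [(x, c), (x, \<not> c)] \<otimes>\<^bsub>AG\<^esub> E v)"
      unfolding cancel using E_append[OF w cancel(4)] E_append[OF cancel(3), of "[(x, c), (x, \<not> c)] @ v"] cancel w by simp
    then have zy: "E z = E y" unfolding e1 using cancel by (simp add: E_append)
    have "E y \<in> carrier AG" using cancel by simp
    then have "E y = E y \<otimes>\<^bsub>AG\<^esub> \<one>\<^bsub>AG\<^esub>" by simp
    then show ?thesis unfolding zy using N_one by (intro conjI bexI)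
  next
    case (relator u v r)
    have r: "r \<in> words S" "E r \<in> N" using relator rels_ok rel_N by auto
    have Er: "E r \<in> carrier AG" using N_carrier[OF r(2)] .
    have "E z = E u \<otimes>\<^bsub>AG\<^esub> (E r \<otimes>\<^bsub>AG\<^esub> E v)"
      unfolding relator using E_append[OF r(1) relator(4)] E_append[OF relator(3), of "r @ v"] relator r by simp
    also have "\<dots> = E u \<otimes>\<^bsub>AG\<^esub> (E v \<otimes>\<^bsub>AG\<^esub> E r)" using N_central[OF r(2)] relator by simp
    also have "\<dots> = E y \<otimes>\<^bsub>AG\<^esub> E r" using relator Er by (simp add: E_append A.m_assoc)
    finally have zy: "E z = E y \<otimes>\<^bsub>AG\<^esub> E r" .
    then have "E y = E z \<otimes>\<^bsub>AG\<^esub> inv\<^bsub>AG\<^esub> E r" using relator Er by (simp add: A.m_assoc)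
    then show ?thesis using zy r N_inv[OF r(2)] by (intro conjI bexI)
  qed
  then show "\<exists>n \<in> N. E y = E z \<otimes>\<^bsub>AG\<^esub> n" "\<exists>n \<in> N. E z = E y \<otimes>\<^bsub>AG\<^esub> n" by auto
qed

lemma EQ_N: assumes "(a, b) \<in> Wp.EQ" "a \<in> words S" shows "\<exists>n \<in> N. E a = E b \<otimes>\<^bsub>AG\<^esub> n"
  using assms(1) unfolding pres_eq_def
proof (induction rule: rtrancl_induct)
  case base
  have "E a \<in> carrier AG" using assms(2) by simp
  then have "E a = E a \<otimes>\<^bsub>AG\<^esub> \<one>\<^bsub>AG\<^esub>" by simp
  then show ?case using N_one by (intro bexI)
next
  case (step y z)
  obtain n1 where n1: "n1 \<in> N" "E a = E y \<otimes>\<^bsub>AG\<^esub> n1" using step.IH ..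
  have "(a, y) \<in> Wp.EQ" using step.hyps(1) by (simp add: pres_eq_def)
  then have y: "y \<in> words S" using Wp.EQ_words assms(2) by simp
  have "(y, z) \<in> pres_step S (cox_rels S m) \<or> (z, y) \<in> pres_step S (cox_rels S m)" using step.hyps(2) by auto
  then have "\<exists>n2 \<in> N. E y = E z \<otimes>\<^bsub>AG\<^esub> n2" using step_N by (elim disjE) simp_all
  then obtain n2 where n2: "n2 \<in> N" "E y = E z \<otimes>\<^bsub>AG\<^esub> n2" ..
  have "(y, z) \<in> Wp.EQ" using step.hyps(2) unfolding pres_eq_def by auto
  then have z: "z \<in> words S" using Wp.EQ_words y by simp
  have "E a = E z \<otimes>\<^bsub>AG\<^esub> (n2 \<otimes>\<^bsub>AG\<^esub> n1)" using n1 n2 y z N_carrier by (simp add: A.m_assoc)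
  then show ?case using N_mult[OF n2(1) n1(1)] by (intro bexI)
qed

lemma K_N: "K \<subseteq> N"
proof
  fix g assume g: "g \<in> K"
  then have gc: "g \<in> carrier AG" and pg: "phi g = \<one>\<^bsub>W\<^esub>" by (auto simp: K_def kernel_def)
  obtain z where z: "z \<in> words S" "g = E z" by (rule AG_E[OF gc])
  have "Wp.cls z = Wp.cls []" using phi_E[OF z(1)] pg z W_is Wp.one_PG by simp
  then have "(z, []) \<in> Wp.EQ" by (simp add: Wp.cls_eq)
  then have "\<exists>n \<in> N. E z = E [] \<otimes>\<^bsub>AG\<^esub> n" using EQ_N z by simp
  then obtain n where "n \<in> N" "E z = E [] \<otimes>\<^bsub>AG\<^esub> n" ..
  then show "g \<in> N" using z N_carrier by (simp add: E_def)
qed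

lemma K_eq_N: "K = N" using K_N N_Zc Zc_K by auto
lemma Zc_eq_K: "Zc = K" using K_N N_Zc Zc_K by auto

end



context cox
begin

definition cl0 where "cl0 s0 x \<longleftrightarrow> (\<exists>w \<in> carrier W. x = inv\<^bsub>W\<^esub> w \<otimes>\<^bsub>W\<^esub> gen s0 \<otimes>\<^bsub>W\<^esub> w)"

definition frho where "frho s0 x = (if cl0 s0 x then 1 else (0::int))"

definition rho where "rho s0 A = eval_word integer_group (frho s0) (SOME w. w \<in> A)"

lemma cl0_conj: assumes "cl0 s0 x" "v \<in> carrier W" "s0 \<in> S"
  shows "cl0 s0 (inv\<^bsub>W\<^esub> v \<otimes>\<^bsub>W\<^esub> x \<otimes>\<^bsub>W\<^esub> v)"
proof -
  obtain w where w: "w \<in> carrier W" "x = inv\<^bsub>W\<^esub> w \<otimes>\<^bsub>W\<^esub> gen s0 \<otimes>\<^bsub>W\<^esub> w"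
    using assms(1) unfolding cl0_def ..
  have "inv\<^bsub>W\<^esub> v \<otimes>\<^bsub>W\<^esub> x \<otimes>\<^bsub>W\<^esub> v = inv\<^bsub>W\<^esub> (w \<otimes>\<^bsub>W\<^esub> v) \<otimes>\<^bsub>W\<^esub> gen s0 \<otimes>\<^bsub>W\<^esub> (w \<otimes>\<^bsub>W\<^esub> v)"
    using w assms by (simp add: W.m_assoc W.inv_mult_group)
  then show ?thesis unfolding cl0_def using w assms by (intro bexI[of _ "w \<otimes>\<^bsub>W\<^esub> v"]) simp_all
qed

lemma cl0_qop: assumes "x \<in> Q" "y \<in> Q" "s0 \<in> S"
  shows "cl0 s0 (quandle_op S m x y) \<longleftrightarrow> cl0 s0 x"
proof
  assume c: "cl0 s0 x" then show "cl0 s0 (quandle_op S m x y)"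
    unfolding quandle_op_def using cl0_conj[OF c Q_carrier[OF assms(2)] assms(3)] assms(2) by simp
next
  assume c: "cl0 s0 (quandle_op S m x y)"
  have "cl0 s0 (quandle_op S m (quandle_op S m x y) y)"
    unfolding quandle_op_def[of S m "quandle_op S m x y"]
    by (rule cl0_conj[OF c Q_carrier[OF assms(2)] assms(3)])
  then show "cl0 s0 x" using qop_involutive assms by simp
qed

lemma rho_hom_aux: assumes s0: "s0 \<in> S"
  shows "rho s0 \<in> hom AG integer_group" "w \<in> words Q \<Longrightarrow> rho s0 (Ap.cls w) = eval_word integer_group (frho s0) w"
proof -
  have f: "frho s0 ` Q \<subseteq> carrier integer_group" by simp
  have rels: "eval_word integer_group (frho s0) r = \<one>\<^bsub>integer_group\<^esub>" if rr: "r \<in> ad_rels S m" for r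
  proof -
    obtain x y where xy: "x \<in> Q" "y \<in> Q" "r = [(y, True), (x, False), (y, False), (quandle_op S m x y, True)]"
      using rr unfolding ad_rels_def by blast
    then show ?thesis using cl0_qop[OF xy(1,2) s0] by (simp add: frho_def)
  qed
  show "rho s0 \<in> hom AG integer_group"
    unfolding AG_is rho_def[abs_def] by (rule Ap.eval_hom(1)[OF group_integer_group f rels])
  show "w \<in> words Q \<Longrightarrow> rho s0 (Ap.cls w) = eval_word integer_group (frho s0) w"
    unfolding rho_def by (rule Ap.eval_hom(2)[OF group_integer_group f rels])
qed

lemma rho_e: "s0 \<in> S \<Longrightarrow> x \<in> Q \<Longrightarrow> rho s0 (e x) = frho s0 x"
  using rho_hom_aux(2)[of s0 "[(x, False)]"] by (simp add: e_cls)

lemma rho_Cg: assumes "s0 \<in> S" shows "rho s0 \<in> hom Cg integer_group"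
proof -
  have h: "rho s0 \<in> hom AG integer_group" using rho_hom_aux(1)[OF assms] .
  show ?thesis
  proof (rule homI)
    fix x assume "x \<in> carrier Cg" then show "rho s0 x \<in> carrier integer_group" by simp
  next
    fix x y assume "x \<in> carrier Cg" "y \<in> carrier Cg"
    then have "x \<in> carrier AG" "y \<in> carrier AG" using Zc_carrier by auto
    then show "rho s0 (x \<otimes>\<^bsub>Cg\<^esub> y) = rho s0 x \<otimes>\<^bsub>integer_group\<^esub> rho s0 y"
      using h by (simp add: hom_mult)
  qed
qed

lemma rho_finprod: assumes s0: "s0 \<in> S" and A: "A \<subseteq> R"
  shows "g \<in> A \<rightarrow> Zc \<Longrightarrow> rho s0 (finprod Cg g A) = (\<Sum>s\<in>A. rho s0 (g s))"
proof -
  have "finite A" using A finR finite_subset by auto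
  then show "g \<in> A \<rightarrow> Zc \<Longrightarrow> ?thesis"
  proof (induction A rule: finite_induct)
    case empty
    have "rho s0 \<one>\<^bsub>AG\<^esub> = 0" using group_hom.hom_one[of AG integer_group "rho s0"] rho_hom_aux(1)[OF s0]
      by (simp add: group_hom_def group_hom_axioms_def group_AG)
    then show ?case by simp
  next
    case (insert a A)
    have ga: "g a \<in> Zc" and gA: "g \<in> A \<rightarrow> Zc" using insert.prems by auto
    have "finprod Cg g (insert a A) = g a \<otimes>\<^bsub>Cg\<^esub> finprod Cg g A"
      by (rule Cg.finprod_insert) (use insert ga gA in simp_all)
    moreover have "finprod Cg g A \<in> carrier Cg" using Cg.finprod_closed gA by simp
    ultimately have "rho s0 (finprod Cg g (insert a A)) = rho s0 (g a) + rho s0 (finprod Cg g A)"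
      using hom_mult[OF rho_Cg[OF s0]] ga by simp
    then show ?case using insert gA by simp
  qed
qed

lemma rho_pow: assumes "s0 \<in> S" "z \<in> Zc" shows "rho s0 (z [^]\<^bsub>Cg\<^esub> (i::int)) = i * rho s0 z"
  using hom_int_pow[OF rho_Cg[OF assms(1)], of z i] assms Cg.is_group by simp

lemma rho_sq: assumes "s0 \<in> R" "s \<in> R" shows "rho s0 (sq (gen s)) = (if s = s0 then 2 else 0)"
proof -
  have s0: "s0 \<in> S" and s: "s \<in> S" using assms RS by auto
  have "rho s0 (sq (gen s)) = 2 * frho s0 (gen s)"
    using rho_hom_aux(1)[OF s0] gen_Q[OF s] rho_e[OF s0] by (simp add: sq_def hom_mult)
  moreover have "cl0 s0 (gen s) \<longleftrightarrow> s = s0"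
  proof
    assume c: "cl0 s0 (gen s)"
    have gQ: "gen s \<in> Q" using gen_Q[OF s] .
    have u: "\<exists>!r \<in> R. \<exists>w \<in> carrier W. gen s = inv\<^bsub>W\<^esub> w \<otimes>\<^bsub>W\<^esub> gen r \<otimes>\<^bsub>W\<^esub> w"
      using reps gQ by simp
    have 1: "\<exists>w \<in> carrier W. gen s = inv\<^bsub>W\<^esub> w \<otimes>\<^bsub>W\<^esub> gen s \<otimes>\<^bsub>W\<^esub> w"
      using s by (intro bexI[of _ "\<one>\<^bsub>W\<^esub>"]) simp_all
    have 2: "\<exists>w \<in> carrier W. gen s = inv\<^bsub>W\<^esub> w \<otimes>\<^bsub>W\<^esub> gen s0 \<otimes>\<^bsub>W\<^esub> w"
      using c unfolding cl0_def .
    show "s = s0" using u 1 2 assms by (metis (no_types, lifting))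
  next
    assume "s = s0" then show "cl0 s0 (gen s)" unfolding cl0_def using s
      by (intro bexI[of _ "\<one>\<^bsub>W\<^esub>"]) simp_all
  qed
  ultimately show ?thesis by (simp add: frho_def)
qed

lemma rho_F: assumes "s0 \<in> R" shows "rho s0 (F f) = 2 * f s0"
proof -
  have s0: "s0 \<in> S" using assms RS by auto
  have "rho s0 (F f) = (\<Sum>s\<in>R. rho s0 (sq (gen s) [^]\<^bsub>Cg\<^esub> f s))"
    unfolding F_def using rho_finprod[OF s0 subset_refl] F_Pi by simp
  also have "\<dots> = (\<Sum>s\<in>R. (if s = s0 then 2 * f s0 else 0))"
  proof (rule sum.cong)
    fix s assume s: "s \<in> R"
    then have "s \<in> S" using RS by auto
    then show "rho s0 (sq (gen s) [^]\<^bsub>Cg\<^esub> f s) = (if s = s0 then 2 * f s0 else 0)"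
      using rho_pow[OF s0 sqgen_Zc] rho_sq[OF assms s] by simp
  qed simp
  also have "\<dots> = 2 * f s0" using assms finR by simp
  finally show ?thesis .
qed

lemma F_inj: "inj_on F (R \<rightarrow>\<^sub>E UNIV)"
proof (rule inj_onI)
  fix f g assume f: "f \<in> R \<rightarrow>\<^sub>E UNIV" and g: "g \<in> R \<rightarrow>\<^sub>E UNIV" and eq: "F f = F g"
  show "f = g"
  proof (rule extensionalityI)
    show "f \<in> extensional R" using f by (simp add: PiE_def)
    show "g \<in> extensional R" using g by (simp add: PiE_def)
  next
    fix s assume "s \<in> R"
    then show "f s = g s" using rho_F[of s f] rho_F[of s g] eq by simp
  qed
qed

end



context cox
begin

lemma F_image: "F ` (R \<rightarrow>\<^sub>E UNIV) = Zc"
  using K_eq_N Zc_eq_K by (simp add: N_def)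

lemma F_bij: "bij_betw F (R \<rightarrow>\<^sub>E UNIV) Zc"
  using F_inj F_image by (simp add: bij_betw_def)

lemma F_cong: "(\<And>s. s \<in> R \<Longrightarrow> f s = g s) \<Longrightarrow> F f = F g"
  using F_restrict[of f] F_restrict[of g] by (metis restrict_ext)

definition Phi where "Phi x = F (Poly_Mapping.lookup x)"

lemma Phi_iso: "Phi \<in> iso (free_Abelian_group R) Cg"
proof (rule isoI)
  show "Phi \<in> hom (free_Abelian_group R) Cg"
  proof (rule homI)
    fix x show "Phi x \<in> carrier Cg" using F_closed by (simp add: Phi_def)
  next
    fix x y
    show "Phi (x \<otimes>\<^bsub>free_Abelian_group R\<^esub> y) = Phi x \<otimes>\<^bsub>Cg\<^esub> Phi y"
    proof -
      have "Poly_Mapping.lookup (x + y) = (\<lambda>s. Poly_Mapping.lookup x s + Poly_Mapping.lookup y s)"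
        by (rule ext) (simp add: Poly_Mapping.lookup_add)
      then show ?thesis using F_add[of "Poly_Mapping.lookup x" "Poly_Mapping.lookup y"] by (simp add: Phi_def)
    qed
  qed
  show "bij_betw Phi (carrier (free_Abelian_group R)) (carrier Cg)"
    unfolding bij_betw_def
  proof
    show "inj_on Phi (carrier (free_Abelian_group R))"
    proof (rule inj_onI)
      fix x y assume x: "x \<in> carrier (free_Abelian_group R)" and y: "y \<in> carrier (free_Abelian_group R)"
        and eq: "Phi x = Phi y"
      have "F (restrict (Poly_Mapping.lookup x) R) = F (restrict (Poly_Mapping.lookup y) R)"
        using eq by (simp add: Phi_def F_restrict)
      then have r: "restrict (Poly_Mapping.lookup x) R = restrict (Poly_Mapping.lookup y) R"
        using F_inj by (auto simp: inj_on_def)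
      show "x = y"
      proof (rule poly_mapping_eqI)
        fix k show "Poly_Mapping.lookup x k = Poly_Mapping.lookup y k"
        proof (cases "k \<in> R")
          case True then show ?thesis using r by (metis restrict_apply')
        next
          case False
          then have "k \<notin> Poly_Mapping.keys x" "k \<notin> Poly_Mapping.keys y" using x y by auto
          then show ?thesis by (simp add: Poly_Mapping.in_keys_iff)
        qed
      qed
    qed
    show "Phi ` carrier (free_Abelian_group R) = carrier Cg"
    proof
      show "Phi ` carrier (free_Abelian_group R) \<subseteq> carrier Cg" using F_closed by (auto simp: Phi_def)
    next
      show "carrier Cg \<subseteq> Phi ` carrier (free_Abelian_group R)"
      proof
        fix z assume "z \<in> carrier Cg"
        then have "z \<in> F ` (R \<rightarrow>\<^sub>E UNIV)" using F_image by simp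
        then obtain f where f: "z = F f" by auto
        define g where "g = (\<lambda>s. if s \<in> R then f s else 0)"
        have fin: "finite {s. g s \<noteq> 0}" using finR by (rule finite_subset[rotated]) (auto simp: g_def)
        define x where "x = Abs_poly_mapping g"
        have lx: "Poly_Mapping.lookup x = g" using fin by (simp add: x_def)
        have "Poly_Mapping.keys x \<subseteq> R" by (auto simp: Poly_Mapping.in_keys_iff lx g_def split: if_splits)
        moreover have "Phi x = z" unfolding Phi_def lx f by (rule F_cong) (simp add: g_def)
        ultimately show "z \<in> Phi ` carrier (free_Abelian_group R)" by force
      qed
    qed
  qed
qed

lemma card_classes: "card R = num_classes S m"
proof -
  define kap where "kap s = {inv\<^bsub>W\<^esub> w \<otimes>\<^bsub>W\<^esub> gen s \<otimes>\<^bsub>W\<^esub> w | w. w \<in> carrier W}" for s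
  have "bij_betw kap R (quandle_classes S m)"
    unfolding bij_betw_def
  proof
    show "inj_on kap R"
    proof (rule inj_onI)
      fix s s' assume s: "s \<in> R" and s': "s' \<in> R" and eq: "kap s = kap s'"
      have sS: "s \<in> S" using s RS by auto
      have "gen s \<in> kap s" unfolding kap_def using sS
        by (intro CollectI exI[of _ "\<one>\<^bsub>W\<^esub>"]) simp
      then have "gen s \<in> kap s'" using eq by simp
      then obtain w where w: "w \<in> carrier W" "gen s = inv\<^bsub>W\<^esub> w \<otimes>\<^bsub>W\<^esub> gen s' \<otimes>\<^bsub>W\<^esub> w"
        unfolding kap_def by blast
      have u: "\<exists>!r \<in> R. \<exists>w \<in> carrier W. gen s = inv\<^bsub>W\<^esub> w \<otimes>\<^bsub>W\<^esub> gen r \<otimes>\<^bsub>W\<^esub> w"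
        using reps gen_Q[OF sS] by simp
      have 1: "\<exists>w \<in> carrier W. gen s = inv\<^bsub>W\<^esub> w \<otimes>\<^bsub>W\<^esub> gen s \<otimes>\<^bsub>W\<^esub> w"
        using sS by (intro bexI[of _ "\<one>\<^bsub>W\<^esub>"]) simp_all
      have 2: "\<exists>w \<in> carrier W. gen s = inv\<^bsub>W\<^esub> w \<otimes>\<^bsub>W\<^esub> gen s' \<otimes>\<^bsub>W\<^esub> w"
        using w by (intro bexI[of _ w]) simp_all
      show "s = s'" using u 1 2 s s' by (metis (no_types, lifting))
    qed
    show "kap ` R = quandle_classes S m"
    proof
      show "kap ` R \<subseteq> quandle_classes S m"
      proof
        fix c assume "c \<in> kap ` R"
        then obtain s where s: "s \<in> R" "c = kap s" by auto
        have "gen s \<in> Q" using gen_Q s RS by auto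
        then show "c \<in> quandle_classes S m" unfolding quandle_classes_def kap_def s(2) by blast
      qed
    next
      show "quandle_classes S m \<subseteq> kap ` R"
      proof
        fix c assume "c \<in> quandle_classes S m"
        then obtain x where x: "x \<in> Q" "c = {inv\<^bsub>W\<^esub> w \<otimes>\<^bsub>W\<^esub> x \<otimes>\<^bsub>W\<^esub> w | w. w \<in> carrier W}"
          unfolding quandle_classes_def by blast
        obtain r v where rv: "r \<in> R" "v \<in> carrier W" "x = inv\<^bsub>W\<^esub> v \<otimes>\<^bsub>W\<^esub> gen r \<otimes>\<^bsub>W\<^esub> v"
          using reps x(1) by metis
        have rS: "r \<in> S" using rv RS by auto
        have "c = kap r"
        proof
          show "c \<subseteq> kap r"
          proof
            fix y assume "y \<in> c"
            then obtain w where w: "w \<in> carrier W" "y = inv\<^bsub>W\<^esub> w \<otimes>\<^bsub>W\<^esub> x \<otimes>\<^bsub>W\<^esub> w" using x(2) by blast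
            have "y = inv\<^bsub>W\<^esub> (v \<otimes>\<^bsub>W\<^esub> w) \<otimes>\<^bsub>W\<^esub> gen r \<otimes>\<^bsub>W\<^esub> (v \<otimes>\<^bsub>W\<^esub> w)"
              using w rv rS by (simp add: W.m_assoc W.inv_mult_group)
            then show "y \<in> kap r" unfolding kap_def using w rv by blast
          qed
        next
          show "kap r \<subseteq> c"
          proof
            fix y assume "y \<in> kap r"
            then obtain u where u: "u \<in> carrier W" "y = inv\<^bsub>W\<^esub> u \<otimes>\<^bsub>W\<^esub> gen r \<otimes>\<^bsub>W\<^esub> u" unfolding kap_def by blast
            have "y = inv\<^bsub>W\<^esub> (inv\<^bsub>W\<^esub> v \<otimes>\<^bsub>W\<^esub> u) \<otimes>\<^bsub>W\<^esub> x \<otimes>\<^bsub>W\<^esub> (inv\<^bsub>W\<^esub> v \<otimes>\<^bsub>W\<^esub> u)"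
              using u rv rS by (simp add: W.m_assoc W.inv_mult_group)
            then show "y \<in> c" unfolding x(2) using u rv by blast
          qed
        qed
        then show "c \<in> kap ` R" using rv(1) by blast
      qed
    qed
  qed
  then show ?thesis unfolding num_classes_def by (rule bij_betw_same_card)
qed

lemma Cg_iso: "Cg \<cong> free_Abelian_group {..< num_classes S m}"
proof -
  have 1: "free_Abelian_group R \<cong> Cg" using Phi_iso by (rule is_isoI)
  have 2: "Cg \<cong> free_Abelian_group R" using group.iso_sym[OF group_free_Abelian_group 1] .
  have "R \<approx> {..< num_classes S m}" using eqpoll_iff_finite_card finR card_classes by blast
  then have 3: "free_Abelian_group R \<cong> free_Abelian_group {..< num_classes S m}"
    by (simp add: isomorphic_free_Abelian_groups)
  show ?thesis using iso_trans[OF 2 3] .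
qed

end

theorem theorem3p1:
  fixes S :: "'a set" and m :: "'a \<Rightarrow> 'a \<Rightarrow> enat" and R :: "'a set"
  assumes "finite S"
    and "coxeter_matrix S m"
    and "R \<subseteq> S"
    and "\<forall>x \<in> coxeter_quandle S m. \<exists>!s \<in> R. \<exists>w \<in> carrier (coxeter_group S m).
            x = inv\<^bsub>coxeter_group S m\<^esub> w \<otimes>\<^bsub>coxeter_group S m\<^esub> cox_gen S m s
                  \<otimes>\<^bsub>coxeter_group S m\<^esub> w"
  shows "comm_group ((adjoint_group S m)\<lparr>carrier := kernel (adjoint_group S m) (coxeter_group S m) (ad_phi S m)\<rparr>)
     \<and> (\<forall>s \<in> R. ad_gen S m (cox_gen S m s) \<otimes>\<^bsub>adjoint_group S m\<^esub> ad_gen S m (cox_gen S m s)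
                  \<in> kernel (adjoint_group S m) (coxeter_group S m) (ad_phi S m))
     \<and> bij_betw
         (\<lambda>f. finprod ((adjoint_group S m)\<lparr>carrier := kernel (adjoint_group S m) (coxeter_group S m) (ad_phi S m)\<rparr>)
                (\<lambda>s. (ad_gen S m (cox_gen S m s) \<otimes>\<^bsub>adjoint_group S m\<^esub> ad_gen S m (cox_gen S m s))
                       [^]\<^bsub>(adjoint_group S m)\<lparr>carrier := kernel (adjoint_group S m) (coxeter_group S m) (ad_phi S m)\<rparr>\<^esub> (f s :: int))
                R)
         (R \<rightarrow>\<^sub>E (UNIV :: int set))
         (kernel (adjoint_group S m) (coxeter_group S m) (ad_phi S m))
     \<and> (adjoint_group S m)\<lparr>carrier := kernel (adjoint_group S m) (coxeter_group S m) (ad_phi S m)\<rparr>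
         \<cong> free_Abelian_group {..< num_classes S m}"
proof -
  interpret cox S m R using assms by unfold_locales
  have KZ: "kernel (adjoint_group S m) (coxeter_group S m) (ad_phi S m) = Zc"
    using Zc_eq_K by (simp add: K_def)
  have Fe: "(\<lambda>f. finprod ((adjoint_group S m)\<lparr>carrier := Zc\<rparr>)
                (\<lambda>s. (ad_gen S m (cox_gen S m s) \<otimes>\<^bsub>adjoint_group S m\<^esub> ad_gen S m (cox_gen S m s))
                       [^]\<^bsub>(adjoint_group S m)\<lparr>carrier := Zc\<rparr>\<^esub> (f s :: int)) R) = F"
    by (rule ext) (simp add: F_def sq_def)
  have sqK: "\<forall>s \<in> R. ad_gen S m (cox_gen S m s) \<otimes>\<^bsub>adjoint_group S m\<^esub> ad_gen S m (cox_gen S m s) \<in> Zc"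
    using sqgen_Zc RS by (auto simp: sq_def)
  show ?thesis unfolding KZ Fe using comm_Cg sqK F_bij Cg_iso by simp
qed



end
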